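(* Assume the setting in the context, with one of Conditions 1–4 fulfilled. Let $q\ge0$ and $r\ge-1$. Then for $0<\varepsilon\le1$, $$\bigl\| (\Psi^* - [\varphi_{k_0}]\Phi^* )\, [\varepsilon^{q} (|k-k_0|^2 + \varepsilon^2)^{-q/2} \chi_{\mathfrak K}(k-k_0)] \bigr\|_{L_2(\mathbb{R}) \to L_2(\mathbb{R})} \le C \varepsilon^{\min(1,q)},$$ $$\bigl\| (\Psi^* - [\varphi_{k_0}]\Phi^* )\, [\varepsilon^{r} (|k-k_0|^2 + \varepsilon^2)^{-r/2} |k-k_0|^{-1} \chi_{\mathfrak K}(k-k_0)] \bigr\|_{L_2(\mathbb{R}) \to L_2(\mathbb{R})} \le C \varepsilon^{\min(0,r)},$$ where the constant $C$ in the first estimate depends only on $q,\kappa,\|\theta_{k_0}\|_{M_\kappa(k_0)}$, and in the second only on $r,\kappa,\|\theta_{k_0}\|_{M_\kappa(k_0)}$.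
   Context: Let $\check g$ be a real-valued measurable $1$-periodic function on $\mathbb R$ with $0<\alpha_0\le\check g\le\alpha_1<\infty$, and let $\omega$ be a $1$-periodic function with $\|\omega\|_{L_2(0,1)}=1$ and $0<\beta_0\le\omega\le\beta_1<\infty$; put $g=\omega^2\check g$. Let $\widetilde H^1(0,1)$ be the set of $f\in H^1(0,1)$ whose $1$-periodic extension lies in $H^1_{\mathrm{loc}}(\mathbb R)$, and $\widetilde{\mathcal H}^1(0,1)=\{f:\omega^{-1}f\in\widetilde H^1(0,1)\}$. For $k\in\mathbb R$ let $A(k)$ be the selfadjoint operator in $L_2(0,1)$ generated by the form $\int_0^1 g|\phi'+ik\phi|^2dx$, $\phi=\omega^{-1}u\in\widetilde H^1(0,1)$; let $E_1(k)\le E_2(k)\le\dots$ be its eigenvalues counted with multiplicity and $\varphi_l(\cdot,k)$ corresponding normalized eigenfunctions, extended $1$-periodically in $x$ and chosen so that $e^{ikx}\varphi_l(x,k)$ is $2\pi$-periodic in $k$. Fix $s\in\mathbb N$ and write $E=E_s$, $\varphi=\varphi_s$. The four conditions (with the convention $E_0(0)=-\infty$): Condition 1: $s$ odd and the interval $(E_{s-1}(0),E(0))$ is nonempty; Condition 2: $s$ even and $(E(0),E_{s+1}(0))\neq\varnothing$; Condition 3: $s$ odd and $(E(\pi),E_{s+1}(\pi))\ne\varnothing$; Condition 4: $s$ even and $(E_{s-1}(\pi),E(\pi))\neq\varnothing$. Put $k_0=0$ under Conditions 1, 2 and $k_0=\pi$ under Conditions 3, 4. It is known that under Condition 1 or 2: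 $E(k)=\sigma_0\pm b_0k^2+k^4\gamma_0(k)$ for $|k|\le\pi$, with $b_0>0$, sign $+$ for Condition 1 and $-$ for Condition 2, $\sigma_0=E(0)$, $\gamma_0$ continuous and real-analytic on $|k|<\pi$, and $\varphi(x,k)=\varphi_0(x)+k\theta_0(x,k)$ for $|k|<\pi$, with $\varphi_0=\varphi(\cdot,0)$ and $\theta_0(\cdot,k)$ real-analytic in $k$ with values in $\widetilde{\mathcal H}^1(0,1)$; under Condition 3 or 4: $E(k)=\sigma_\pi\pm b_\pi(k-\pi)^2+(k-\pi)^4\gamma_\pi(k)$ for $0\le k\le2\pi$, with $b_\pi>0$, sign $+$ for Condition 4 and $-$ for Condition 3, $\sigma_\pi=E(\pi)$, $\gamma_\pi$ continuous and real-analytic on $(0,2\pi)$, and $\varphi(x,k)=\varphi_\pi(x)+(k-\pi)\theta_\pi(x,k)$ for $0<k<2\pi$, with $\varphi_\pi=\varphi(\cdot,\pi)$ and $\theta_\pi$ analogous. Standing assumption: $\gamma_{k_0}(k_0)\neq0$. Define $\tilde\gamma_{k_0}$ near $k_0$ by $(E(k)-\sigma_{k_0})^{1/2}=b_{k_0}^{1/2}|k-k_0|+|k-k_0|^3\tilde\gamma_{k_0}(k)$ under Conditions 1, 4 and $(\sigma_{k_0}-E(k))^{1/2}=b_{k_0}^{1/2}|k-k_0|-|k-k_0|^3\tilde\gamma_{k_0}(k)$ under Conditions 2, 3 (so $\tilde\gamma_{k_0}(k)\to\frac12 b_{k_0}^{-1/2}\gamma_{k_0}(k_0)$ as $k\to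 k_0$). Fix $0<\kappa<\pi$ such that for $|k-k_0|\le\kappa$: $\frac12|\gamma_{k_0}(k_0)|\le|\gamma_{k_0}(k)|\le\frac32|\gamma_{k_0}(k_0)|$, $\frac12|\tilde\gamma_{k_0}(k_0)|\le|\tilde\gamma_{k_0}(k)|\le\frac32|\tilde\gamma_{k_0}(k_0)|$, and $(k-k_0)^2|\tilde\gamma_{k_0}(k)|\le\frac12 b_{k_0}^{1/2}$. Put $\mathfrak K=\{k:|k|\le\kappa\}$ and $\|\theta_{k_0}\|_{M_\kappa(k_0)}=\operatorname{ess\,sup}_{x\in\mathbb R}\|\theta_{k_0}(x,\cdot)\|_{C^1[k_0-\kappa,k_0+\kappa]}<\infty$. $\Phi$ is the unitary Fourier transform on $L_2(\mathbb R)$, $(\Phi v)(k)=(2\pi)^{-1/2}\int e^{-ikx}v(x)dx$. $\Psi$ is the operator $(\Psi v)(k)=(2\pi)^{-1/2}\int_{\mathbb R}e^{-ikx}\overline{\varphi(x,k)}v(x)dx$ (extended by continuity); for $h\in L_2(\mathbb R)$ supported in $[k_0-\kappa,k_0+\kappa]$, $(\Psi^*h)(x)=(2\pi)^{-1/2}\int e^{ikx}\varphi(x,k)h(k)dk$. $[f]$ denotes multiplication by $f$, and $\chi_\delta$ the indicator of $\delta$. *)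

theory Defs
  imports "HOL-Analysis.Analysis"
begin

definition sq_int :: "(real \<Rightarrow> complex) \<Rightarrow> bool" where
  "sq_int u \<longleftrightarrow> u \<in> borel_measurable lborel \<and> integrable lborel (\<lambda>x. (cmod (u x))\<^sup>2)"

definition L2norm :: "(real \<Rightarrow> complex) \<Rightarrow> real" where
  "L2norm u = sqrt (LINT x|lborel. (cmod (u x))\<^sup>2)"

text \<open>Inverse unitary Fourier transform (integral formula, used on compactly supported L2 functions).\<close>
definition Phi_adj :: "(real \<Rightarrow> complex) \<Rightarrow> real \<Rightarrow> complex" where
  "Phi_adj h x = complex_of_real ((2*pi) powr (-1/2)) *
      (LINT k|lborel. exp (\<i> * complex_of_real (k*x)) * h k)"

definition Psi_adj :: "(real \<Rightarrow> real \<Rightarrow> complex) \<Rightarrow> (real \<Rightarrow> complex) \<Rightarrow> real \<Rightarrow> complex" where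
  "Psi_adj \<phi> h x = complex_of_real ((2*pi) powr (-1/2)) *
      (LINT k|lborel. exp (\<i> * complex_of_real (k*x)) * \<phi> x k * h k)"

definition diff_op :: "(real \<Rightarrow> real \<Rightarrow> complex) \<Rightarrow> (real \<Rightarrow> complex) \<Rightarrow> (real \<Rightarrow> complex) \<Rightarrow> real \<Rightarrow> complex" where
  "diff_op \<phi> \<phi>0 h x = Psi_adj \<phi> h x - \<phi>0 x * Phi_adj h x"

text \<open>||f||_{C^1[a,b]} = sup|f| + sup|f'| is at most M (f continuously differentiable on [a,b]).\<close>
definition c1_norm_le :: "(real \<Rightarrow> complex) \<Rightarrow> real \<Rightarrow> real \<Rightarrow> real \<Rightarrow> bool" where
  "c1_norm_le f a b M \<longleftrightarrow> (\<exists>f'. continuous_on {a..b} f' \<and>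
      (\<forall>k\<in>{a..b}. (f has_vector_derivative f' k) (at k within {a..b})) \<and>
      (\<forall>k\<in>{a..b}. \<forall>t\<in>{a..b}. cmod (f k) + cmod (f' t) \<le> M))"

text \<open>Data used from the setting: phi(x,k) = phi_k0(x) + (k-k0) theta(x,k) for |k-k0| <= kappa,
  with ||theta||_{M_kappa(k0)} <= M.\<close>
definition bloch_data :: "real \<Rightarrow> real \<Rightarrow> real \<Rightarrow> (real \<Rightarrow> real \<Rightarrow> complex) \<Rightarrow> (real \<Rightarrow> complex)
    \<Rightarrow> (real \<Rightarrow> real \<Rightarrow> complex) \<Rightarrow> bool" where
  "bloch_data k0 \<kappa> M \<phi> \<phi>0 \<theta> \<longleftrightarrow>
     (\<lambda>(x,k). \<phi> x k) \<in> borel_measurable (lborel \<Otimes>\<^sub>M lborel) \<and>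
     \<phi>0 \<in> borel_measurable lborel \<and>
     (\<lambda>(x,k). \<theta> x k) \<in> borel_measurable (lborel \<Otimes>\<^sub>M lborel) \<and>
     (\<forall>x k. \<bar>k - k0\<bar> \<le> \<kappa> \<longrightarrow> \<phi> x k = \<phi>0 x + complex_of_real (k - k0) * \<theta> x k) \<and>
     (AE x in lborel. c1_norm_le (\<theta> x) (k0 - \<kappa>) (k0 + \<kappa>) M)"

definition cut1 :: "real \<Rightarrow> real \<Rightarrow> real \<Rightarrow> real \<Rightarrow> real \<Rightarrow> real" where
  "cut1 q \<epsilon> k0 \<kappa> k = \<epsilon> powr q * ((k - k0)\<^sup>2 + \<epsilon>\<^sup>2) powr (-q/2) * indicator {t. \<bar>t\<bar> \<le> \<kappa>} (k - k0)"

definition cut2 :: "real \<Rightarrow> real \<Rightarrow> real \<Rightarrow> real \<Rightarrow> real \<Rightarrow> real" where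
  "cut2 r \<epsilon> k0 \<kappa> k = \<epsilon> powr r * ((k - k0)\<^sup>2 + \<epsilon>\<^sup>2) powr (-r/2) * inverse \<bar>k - k0\<bar>
      * indicator {t. \<bar>t\<bar> \<le> \<kappa>} (k - k0)"

end

theory Submission
  imports Defs "HOL-Probability.Probability"
begin

lemma gauss_char:
  fixes R u :: real assumes R: "R > 0"
  shows "(LINT x|lborel. exp (\<i> * complex_of_real (u*x)) * complex_of_real (exp (-(x/R)\<^sup>2/2)))
         = complex_of_real (R * sqrt (2*pi) * exp (-(u*R)\<^sup>2/2))"
proof -
  have "char std_normal_distribution (u*R) = complex_of_real (exp (-((u*R)^2)/2))"
    by (simp add: char_std_normal_distribution)
  also have "char std_normal_distribution (u*R) =
      (LINT y|lborel. std_normal_density y *\<^sub>R exp (\<i> * complex_of_real (u*R*y)))"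
    unfolding char_def
    by (subst integral_density) (auto simp: normal_density_nonneg)
  finally have A: "(LINT y|lborel. std_normal_density y *\<^sub>R exp (\<i> * complex_of_real (u*R*y)))
      = complex_of_real (exp (-((u*R)^2)/2))" .
  have "(LINT x|lborel. exp (\<i> * complex_of_real (u*x)) * complex_of_real (exp (-(x/R)\<^sup>2/2)))
      = \<bar>R\<bar> *\<^sub>R (LINT y|lborel. exp (\<i> * complex_of_real (u*(0+R*y))) * complex_of_real (exp (-((0+R*y)/R)\<^sup>2/2)))"
    using R by (intro lborel_integral_real_affine) simp
  also have "(\<lambda>y. exp (\<i> * complex_of_real (u*(0+R*y))) * complex_of_real (exp (-((0+R*y)/R)\<^sup>2/2)))
      = (\<lambda>y. complex_of_real (sqrt (2*pi)) * (std_normal_density y *\<^sub>R exp (\<i> * complex_of_real (u*R*y))))"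
    using R by (auto simp: std_normal_density_def fun_eq_iff scaleR_conv_of_real mult_ac)
  also have "(LINT y|lborel. complex_of_real (sqrt (2*pi)) * (std_normal_density y *\<^sub>R exp (\<i> * complex_of_real (u*R*y))))
     = complex_of_real (sqrt (2*pi)) * complex_of_real (exp (-((u*R)^2)/2))"
    by (simp only: integral_mult_right_zero A)
  finally show ?thesis using R by (simp add: scaleR_conv_of_real)
qed



definition gw :: "real \<Rightarrow> real \<Rightarrow> real" where "gw R x = exp (-(x/R)\<^sup>2/2)"

lemma gw_pos: "gw R x > 0" by (simp add: gw_def)
lemma gw_le1: "gw R x \<le> 1" by (simp add: gw_def)
lemma gw_meas[measurable]: "gw R \<in> borel_measurable borel" unfolding gw_def by measurable

lemma gw_integral:
  assumes R: "R > 0"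
  shows "has_bochner_integral lborel (gw R) (R * sqrt (2*pi))"
proof -
  have "has_bochner_integral lborel (\<lambda>x. std_normal_density x * x ^ (2 * 0)) (fact (2 * 0) / (2^0 * fact 0))"
    by (rule std_normal_moment_even)
  then have h: "has_bochner_integral lborel std_normal_density 1" by simp
  then have i: "integrable lborel std_normal_density" by (simp add: has_bochner_integral_iff)
  have i2: "integrable lborel (\<lambda>x. std_normal_density (0 + (1/R) * x))"
    using R by (intro lborel_integrable_real_affine[OF i]) simp
  have e: "gw R x = sqrt (2*pi) * std_normal_density (0 + (1/R) * x)" for x
    by (simp add: gw_def std_normal_density_def power_divide)
  have int: "integrable lborel (gw R)"
    unfolding e using i2 by simp
  have "(LINT x|lborel. std_normal_density x) = \<bar>1/R\<bar> *\<^sub>R (LINT x|lborel. std_normal_density (0 + (1/R) * x))"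
    using R by (intro lborel_integral_real_affine) simp
  then have "(LINT x|lborel. std_normal_density (0 + (1/R) * x)) = R"
    using h R by (simp add: has_bochner_integral_iff field_simps)
  then have "integral\<^sup>L lborel (gw R) = R * sqrt (2*pi)"
    unfolding e by simp
  with int show ?thesis by (simp add: has_bochner_integral_iff)
qed

definition gk :: "real \<Rightarrow> real \<Rightarrow> real" where "gk R u = R * sqrt (2*pi) * gw (1/R) u"

lemma gk_nonneg: "R > 0 \<Longrightarrow> gk R u \<ge> 0" by (simp add: gk_def gw_def)
lemma gk_meas[measurable]: "gk R \<in> borel_measurable borel" unfolding gk_def by measurable
lemma gk_le: "R > 0 \<Longrightarrow> gk R u \<le> R * sqrt (2*pi)"
  unfolding gk_def using gw_le1[of "1/R" u] by (simp add: mult_left_le)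

lemma gk_integral:
  assumes R: "R > 0" shows "has_bochner_integral lborel (gk R) (2*pi)"
proof -
  have "has_bochner_integral lborel (\<lambda>u. R * sqrt (2*pi) * gw (1/R) u) ((R * sqrt (2*pi)) * ((1/R) * sqrt (2*pi)))"
    by (intro has_bochner_integral_mult_right gw_integral) (use R in simp)
  moreover have "(R * sqrt (2*pi)) * ((1/R) * sqrt (2*pi)) = 2*pi" using R by simp
  ultimately show ?thesis by (simp add: gk_def[abs_def])
qed

lemma gk_nn_integral:
  assumes R: "R > 0" shows "(\<integral>\<^sup>+u. ennreal (gk R (u - c)) \<partial>lborel) = ennreal (2*pi)"
proof -
  have "(\<integral>\<^sup>+u. ennreal (gk R u) \<partial>lborel) = (\<integral>\<^sup>+u. ennreal (gk R (-c + 1 * u)) \<partial>lborel)"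
    using nn_integral_real_affine[of "\<lambda>u. ennreal (gk R u)" 1 "-c"] by simp
  moreover have "(\<integral>\<^sup>+u. ennreal (gk R u) \<partial>lborel) = ennreal (2*pi)"
    using gk_integral[OF R] gk_nonneg[OF R]
    by (subst nn_integral_eq_integral) (auto simp: has_bochner_integral_iff)
  ultimately show ?thesis by simp
qed

lemma gauss_char':
  assumes R: "R > 0"
  shows "(LINT x|lborel. exp (\<i> * complex_of_real (u*x)) * complex_of_real (gw R x)) = complex_of_real (gk R u)"
  using gauss_char[OF R, of u] R by (simp add: gw_def gk_def power_divide mult_ac)

lemma prod_integrable:
  fixes f :: "real \<times> real \<Rightarrow> complex" and a b :: "real \<Rightarrow> real"
  assumes [measurable]: "f \<in> borel_measurable (lborel \<Otimes>\<^sub>M lborel)"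
    and ia: "integrable lborel a" and ib: "integrable lborel b"
    and bd: "\<And>x y. norm (f (x,y)) \<le> a x * b y"
  shows "integrable (lborel \<Otimes>\<^sub>M lborel) f"
proof -
  have [measurable]: "a \<in> borel_measurable borel" "b \<in> borel_measurable borel"
    using ia ib by auto
  have "integrable (lborel \<Otimes>\<^sub>M lborel) (\<lambda>(x,y). a x * b y)"
  proof (rule lborel_pair.Fubini_integrable)
    show "integrable lborel (\<lambda>x. LINT y|lborel. norm (case (x, y) of (x, y) \<Rightarrow> a x * b y))"
      using ia ib by (simp add: abs_mult)
    show "AE x in lborel. integrable lborel (\<lambda>y. case (x, y) of (x, y) \<Rightarrow> a x * b y)"
      using ib by simp
  qed measurable
  then show ?thesis
    by (rule Bochner_Integration.integrable_bound) (use bd in \<open>auto intro!: AE_I2 split: prod.splits intro: order_trans[OF _ abs_ge_self]\<close>)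
qed



definition ft :: "(real \<Rightarrow> complex) \<Rightarrow> real \<Rightarrow> complex" where
  "ft g x = (LINT k|lborel. exp (\<i> * complex_of_real (k*x)) * g k)"

lemma ft_meas[measurable]:
  assumes [measurable]: "g \<in> borel_measurable borel"
  shows "ft g \<in> borel_measurable borel"
  unfolding ft_def by measurable

lemma meas_cnj[measurable (raw)]:
  "f \<in> borel_measurable M \<Longrightarrow> (\<lambda>x. cnj (f x)) \<in> borel_measurable M"
  by (rule borel_measurable_continuous_on[where f=cnj]) (auto intro: continuous_on_cnj continuous_on_id)

lemma cmod_iexp[simp]: "cmod (exp (\<i> * complex_of_real t)) = 1"
  by (simp add: norm_exp_i_times)

lemma ft_bound:
  assumes "integrable lborel g"
  shows "cmod (ft g x) \<le> (LINT k|lborel. cmod (g k))"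
  unfolding ft_def
  by (rule order_trans[OF integral_norm_bound]) (simp add: norm_mult)

lemma iexp_cnj_mult:
  "exp (\<i> * complex_of_real (k'*x)) * cnj (exp (\<i> * complex_of_real (k*x))) = exp (\<i> * complex_of_real ((k'-k)*x))"
proof -
  have "cnj (exp (\<i> * complex_of_real (k*x))) = exp (- (\<i> * complex_of_real (k*x)))"
    by (subst exp_cnj) simp
  then show ?thesis by (simp add: exp_add[symmetric] algebra_simps)
qed

lemma key_identity:
  assumes [measurable]: "g \<in> borel_measurable borel" and ig: "integrable lborel g" and R: "R > 0"
  shows "complex_of_real (LINT x|lborel. gw R x * (cmod (ft g x))\<^sup>2)
     = (LINT k|lborel. cnj (g k) * (LINT k'|lborel. g k' * complex_of_real (gk R (k' - k))))"
proof -
  define N where "N = (LINT k|lborel. cmod (g k))"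
  have igw: "integrable lborel (gw R)" using gw_integral[OF R] by (simp add: has_bochner_integral_iff)
  have ign: "integrable lborel (\<lambda>k. cmod (g k))" using ig by simp
  have Fb: "cmod (ft g x) \<le> N" for x unfolding N_def by (rule ft_bound[OF ig])
  have N0: "N \<ge> 0" unfolding N_def by simp
  have "complex_of_real (LINT x|lborel. gw R x * (cmod (ft g x))\<^sup>2)
      = (LINT x|lborel. complex_of_real (gw R x) * (ft g x * cnj (ft g x)))"
    by (subst integral_complex_of_real[symmetric]) (simp add: complex_norm_square[symmetric] del: of_real_power)
  also have "\<dots> = (LINT x|lborel. LINT k|lborel. (complex_of_real (gw R x) * ft g x) *
                      (cnj (exp (\<i> * complex_of_real (k*x))) * cnj (g k)))"
  proof -
    have "cnj (ft g x) = (LINT k|lborel. cnj (exp (\<i> * complex_of_real (k*x))) * cnj (g k))" for x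
      unfolding ft_def complex_cnj_mult[symmetric] by (rule Bochner_Integration.integral_cnj[symmetric])
    then show ?thesis by (simp add: ft_def[of g] mult.assoc del: complex_cnj_mult)
  qed
  also have "\<dots> = (LINT k|lborel. LINT x|lborel. (complex_of_real (gw R x) * ft g x) *
                      (cnj (exp (\<i> * complex_of_real (k*x))) * cnj (g k)))"
  proof (rule lborel_pair.Fubini_integral[symmetric])
    show "integrable (lborel \<Otimes>\<^sub>M lborel) (\<lambda>(x,k). (complex_of_real (gw R x) * ft g x) *
                      (cnj (exp (\<i> * complex_of_real (k*x))) * cnj (g k)))"
    proof (rule prod_integrable[where a="\<lambda>x. gw R x * N" and b="\<lambda>k. cmod (g k)"])
      show "integrable lborel (\<lambda>x. gw R x * N)" using igw by simp
      show "integrable lborel (\<lambda>k. cmod (g k))" by (rule ign)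
      have "cmod ((complex_of_real (gw R x) * ft g x) * (cnj (exp (\<i> * complex_of_real (k*x))) * cnj (g k)))
          \<le> gw R x * N * cmod (g k)" for x k
        using Fb[of x] gw_pos[of R x] by (simp add: norm_mult mult_right_mono mult_left_mono)
      then show "\<And>x k. cmod (case (x,k) of (x,k) \<Rightarrow> (complex_of_real (gw R x) * ft g x) *
                      (cnj (exp (\<i> * complex_of_real (k*x))) * cnj (g k))) \<le> gw R x * N * cmod (g k)"
        by simp
    qed measurable
  qed
  also have "\<dots> = (LINT k|lborel. cnj (g k) * (LINT x|lborel. (complex_of_real (gw R x) * ft g x) *
                      cnj (exp (\<i> * complex_of_real (k*x)))))"
    by (simp add: mult_ac)
  also have "\<dots> = (LINT k|lborel. cnj (g k) * (LINT k'|lborel. g k' * complex_of_real (gk R (k' - k))))"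
  proof (rule Bochner_Integration.integral_cong[OF refl])
    fix k
    have "(LINT x|lborel. (complex_of_real (gw R x) * ft g x) * cnj (exp (\<i> * complex_of_real (k*x))))
       = (LINT x|lborel. LINT k'|lborel. (complex_of_real (gw R x) * cnj (exp (\<i> * complex_of_real (k*x))))
            * (exp (\<i> * complex_of_real (k'*x)) * g k'))"
    proof (rule Bochner_Integration.integral_cong[OF refl])
      fix x
      have "(complex_of_real (gw R x) * ft g x) * cnj (exp (\<i> * complex_of_real (k*x)))
          = (complex_of_real (gw R x) * cnj (exp (\<i> * complex_of_real (k*x)))) *
             (LINT k'|lborel. exp (\<i> * complex_of_real (k'*x)) * g k')"
        by (simp add: ft_def mult_ac)
      also have "\<dots> = (LINT k'|lborel. (complex_of_real (gw R x) * cnj (exp (\<i> * complex_of_real (k*x))))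
            * (exp (\<i> * complex_of_real (k'*x)) * g k'))"
        by (rule integral_mult_right_zero[symmetric])
      finally show "(complex_of_real (gw R x) * ft g x) * cnj (exp (\<i> * complex_of_real (k*x))) =
         (LINT k'|lborel. (complex_of_real (gw R x) * cnj (exp (\<i> * complex_of_real (k*x))))
            * (exp (\<i> * complex_of_real (k'*x)) * g k'))" .
    qed
    also have "\<dots> = (LINT k'|lborel. LINT x|lborel. (complex_of_real (gw R x) * cnj (exp (\<i> * complex_of_real (k*x))))
            * (exp (\<i> * complex_of_real (k'*x)) * g k'))"
    proof (rule lborel_pair.Fubini_integral[symmetric])
      show "integrable (lborel \<Otimes>\<^sub>M lborel) (\<lambda>(x,k'). (complex_of_real (gw R x) * cnj (exp (\<i> * complex_of_real (k*x))))
            * (exp (\<i> * complex_of_real (k'*x)) * g k'))"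
      proof (rule prod_integrable[where a="\<lambda>x. gw R x" and b="\<lambda>k. cmod (g k)"])
        show "integrable lborel (\<lambda>x. gw R x)" using igw by simp
        show "integrable lborel (\<lambda>k. cmod (g k))" by (rule ign)
        have "cmod ((complex_of_real (gw R x) * cnj (exp (\<i> * complex_of_real (k*x))))
            * (exp (\<i> * complex_of_real (k'*x)) * g k')) \<le> gw R x * cmod (g k')" for x k'
          using gw_pos[of R x] by (simp add: norm_mult)
        then show "\<And>x k'. cmod (case (x,k') of (x,k') \<Rightarrow> (complex_of_real (gw R x) * cnj (exp (\<i> * complex_of_real (k*x))))
            * (exp (\<i> * complex_of_real (k'*x)) * g k')) \<le> gw R x * cmod (g k')"
          by simp
      qed measurable
    qed
    also have "\<dots> = (LINT k'|lborel. g k' * (LINT x|lborel. exp (\<i> * complex_of_real ((k'-k)*x)) * complex_of_real (gw R x)))"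
    proof (rule Bochner_Integration.integral_cong[OF refl])
      fix k'
      have "(\<lambda>x. (complex_of_real (gw R x) * cnj (exp (\<i> * complex_of_real (k*x))))
            * (exp (\<i> * complex_of_real (k'*x)) * g k')) =
            (\<lambda>x. g k' * (exp (\<i> * complex_of_real ((k'-k)*x)) * complex_of_real (gw R x)))"
        using iexp_cnj_mult[of k' _ k] by (auto simp: fun_eq_iff mult_ac)
      then show "(LINT x|lborel. (complex_of_real (gw R x) * cnj (exp (\<i> * complex_of_real (k*x))))
            * (exp (\<i> * complex_of_real (k'*x)) * g k')) =
          g k' * (LINT x|lborel. exp (\<i> * complex_of_real ((k'-k)*x)) * complex_of_real (gw R x))"
        by simp
    qed
    also have "\<dots> = (LINT k'|lborel. g k' * complex_of_real (gk R (k' - k)))"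
      by (simp only: gauss_char'[OF R])
    finally show "cnj (g k) * (LINT x|lborel. (complex_of_real (gw R x) * ft g x) * cnj (exp (\<i> * complex_of_real (k*x))))
       = cnj (g k) * (LINT k'|lborel. g k' * complex_of_real (gk R (k' - k)))" by simp
  qed
  finally show ?thesis .
qed



lemma gk_sym: "gk R (-u) = gk R u" by (simp add: gk_def gw_def)

lemma schur_bound:
  assumes [measurable]: "g \<in> borel_measurable borel" and ig: "integrable lborel g" and R: "R > 0"
  shows "ennreal (cmod (LINT k|lborel. cnj (g k) * (LINT k'|lborel. g k' * complex_of_real (gk R (k' - k)))))
     \<le> ennreal (2*pi) * (\<integral>\<^sup>+k. ennreal ((cmod (g k))\<^sup>2) \<partial>lborel)"
proof -
  let ?I = "\<lambda>k. (LINT k'|lborel. g k' * complex_of_real (gk R (k' - k)))"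
  have gkn: "\<And>u. gk R u \<ge> 0" using gk_nonneg[OF R] .
  have step1: "ennreal (cmod (LINT k|lborel. cnj (g k) * ?I k)) \<le> (\<integral>\<^sup>+k. ennreal (cmod (cnj (g k) * ?I k)) \<partial>lborel)"
  proof (cases "integrable lborel (\<lambda>k. cnj (g k) * ?I k)")
    case True then show ?thesis by (rule integral_norm_bound_ennreal)
  next
    case False then show ?thesis by (simp add: not_integrable_integral_eq)
  qed
  have step2: "ennreal (cmod (?I k)) \<le> (\<integral>\<^sup>+k'. ennreal (cmod (g k') * gk R (k' - k)) \<partial>lborel)" for k
  proof (cases "integrable lborel (\<lambda>k'. g k' * complex_of_real (gk R (k' - k)))")
    case True
    then have "ennreal (cmod (?I k)) \<le> (\<integral>\<^sup>+k'. ennreal (cmod (g k' * complex_of_real (gk R (k' - k)))) \<partial>lborel)"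
      by (rule integral_norm_bound_ennreal)
    also have "\<dots> = (\<integral>\<^sup>+k'. ennreal (cmod (g k') * gk R (k' - k)) \<partial>lborel)"
      using gkn by (simp add: norm_mult)
    finally show ?thesis .
  next
    case False then show ?thesis by (simp add: not_integrable_integral_eq)
  qed
  have "(\<integral>\<^sup>+k. ennreal (cmod (cnj (g k) * ?I k)) \<partial>lborel)
      = (\<integral>\<^sup>+k. ennreal (cmod (g k)) * ennreal (cmod (?I k)) \<partial>lborel)"
    by (simp add: norm_mult ennreal_mult)
  also have "\<dots> \<le> (\<integral>\<^sup>+k. ennreal (cmod (g k)) * (\<integral>\<^sup>+k'. ennreal (cmod (g k') * gk R (k' - k)) \<partial>lborel) \<partial>lborel)"
    by (intro nn_integral_mono mult_left_mono step2) auto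
  also have "\<dots> = (\<integral>\<^sup>+k. (\<integral>\<^sup>+k'. ennreal (cmod (g k) * (cmod (g k') * gk R (k' - k))) \<partial>lborel) \<partial>lborel)"
  proof (rule nn_integral_cong)
    fix k
    have "ennreal (cmod (g k)) * (\<integral>\<^sup>+k'. ennreal (cmod (g k') * gk R (k' - k)) \<partial>lborel)
       = (\<integral>\<^sup>+k'. ennreal (cmod (g k)) * ennreal (cmod (g k') * gk R (k' - k)) \<partial>lborel)"
      by (rule nn_integral_cmult[symmetric]) measurable
    also have "\<dots> = (\<integral>\<^sup>+k'. ennreal (cmod (g k) * (cmod (g k') * gk R (k' - k))) \<partial>lborel)"
      by (intro nn_integral_cong ennreal_mult[symmetric]) (auto simp: gkn)
    finally show "ennreal (cmod (g k)) * (\<integral>\<^sup>+k'. ennreal (cmod (g k') * gk R (k' - k)) \<partial>lborel)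
       = (\<integral>\<^sup>+k'. ennreal (cmod (g k) * (cmod (g k') * gk R (k' - k))) \<partial>lborel)" .
  qed
  also have "\<dots> \<le> (\<integral>\<^sup>+k. (\<integral>\<^sup>+k'. ennreal ((cmod (g k))\<^sup>2 * gk R (k' - k) / 2)
                     + ennreal ((cmod (g k'))\<^sup>2 * gk R (k' - k) / 2) \<partial>lborel) \<partial>lborel)"
  proof (intro nn_integral_mono)
    fix k k'
    define x where "x = cmod (g k)"
    define y where "y = cmod (g k')"
    define K where "K = gk R (k' - k)"
    have K0: "K \<ge> 0" unfolding K_def by (rule gkn)
    have "2 * x * y \<le> x\<^sup>2 + y\<^sup>2" by (rule sum_squares_bound)
    then have "x * y \<le> (x\<^sup>2 + y\<^sup>2) / 2" by (simp add: field_simps mult.assoc)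
    then have "(x * y) * K \<le> ((x\<^sup>2 + y\<^sup>2) / 2) * K" using K0 by (rule mult_right_mono)
    moreover have "((x\<^sup>2 + y\<^sup>2) / 2) * K = x\<^sup>2 * K / 2 + y\<^sup>2 * K / 2" by (simp add: field_simps)
    moreover have "x * (y * K) = (x * y) * K" by (simp add: mult.assoc)
    ultimately have "x * (y * K) \<le> x\<^sup>2 * K / 2 + y\<^sup>2 * K / 2" by simp
    then have "ennreal (x * (y * K)) \<le> ennreal (x\<^sup>2 * K / 2 + y\<^sup>2 * K / 2)" by (rule ennreal_leI)
    also have "\<dots> = ennreal (x\<^sup>2 * K / 2) + ennreal (y\<^sup>2 * K / 2)"
      by (rule ennreal_plus) (use K0 in auto)
    finally show "ennreal (cmod (g k) * (cmod (g k') * gk R (k' - k))) \<le> ennreal ((cmod (g k))\<^sup>2 * gk R (k' - k) / 2)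
                     + ennreal ((cmod (g k'))\<^sup>2 * gk R (k' - k) / 2)"
      unfolding x_def y_def K_def .
  qed
  also have "\<dots> = (\<integral>\<^sup>+k. (\<integral>\<^sup>+k'. ennreal ((cmod (g k))\<^sup>2 * gk R (k' - k) / 2) \<partial>lborel) \<partial>lborel)
      + (\<integral>\<^sup>+k. (\<integral>\<^sup>+k'. ennreal ((cmod (g k'))\<^sup>2 * gk R (k' - k) / 2) \<partial>lborel) \<partial>lborel)"
    by (simp add: nn_integral_add)
  also have "(\<integral>\<^sup>+k. (\<integral>\<^sup>+k'. ennreal ((cmod (g k))\<^sup>2 * gk R (k' - k) / 2) \<partial>lborel) \<partial>lborel)
      = (\<integral>\<^sup>+k. ennreal ((cmod (g k))\<^sup>2) * ennreal pi \<partial>lborel)"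
  proof (rule nn_integral_cong)
    fix k
    have "(\<integral>\<^sup>+k'. ennreal ((cmod (g k))\<^sup>2 * gk R (k' - k) / 2) \<partial>lborel)
        = (\<integral>\<^sup>+k'. ennreal ((cmod (g k))\<^sup>2 / 2) * ennreal (gk R (k' - k)) \<partial>lborel)"
      using gkn by (intro nn_integral_cong) (simp add: ennreal_mult[symmetric])
    also have "\<dots> = ennreal ((cmod (g k))\<^sup>2 / 2) * ennreal (2*pi)"
      by (simp add: nn_integral_cmult gk_nn_integral[OF R])
    also have "\<dots> = ennreal ((cmod (g k))\<^sup>2) * ennreal pi"
      by (simp add: ennreal_mult[symmetric])
    finally show "(\<integral>\<^sup>+k'. ennreal ((cmod (g k))\<^sup>2 * gk R (k' - k) / 2) \<partial>lborel) = ennreal ((cmod (g k))\<^sup>2) * ennreal pi" .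
  qed
  also have "(\<integral>\<^sup>+k. (\<integral>\<^sup>+k'. ennreal ((cmod (g k'))\<^sup>2 * gk R (k' - k) / 2) \<partial>lborel) \<partial>lborel)
      = (\<integral>\<^sup>+k'. (\<integral>\<^sup>+k. ennreal ((cmod (g k'))\<^sup>2 * gk R (k' - k) / 2) \<partial>lborel) \<partial>lborel)"
    by (rule lborel_pair.Fubini'[symmetric]) measurable
  also have "\<dots> = (\<integral>\<^sup>+k'. ennreal ((cmod (g k'))\<^sup>2) * ennreal pi \<partial>lborel)"
  proof (rule nn_integral_cong)
    fix k'
    have "(\<integral>\<^sup>+k. ennreal ((cmod (g k'))\<^sup>2 * gk R (k' - k) / 2) \<partial>lborel)
        = (\<integral>\<^sup>+k. ennreal ((cmod (g k'))\<^sup>2 / 2) * ennreal (gk R (k - k')) \<partial>lborel)"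
      using gkn gk_sym[of R "k' - _"] by (intro nn_integral_cong) (simp add: ennreal_mult[symmetric])
    also have "\<dots> = ennreal ((cmod (g k'))\<^sup>2 / 2) * ennreal (2*pi)"
      by (simp add: nn_integral_cmult gk_nn_integral[OF R])
    also have "\<dots> = ennreal ((cmod (g k'))\<^sup>2) * ennreal pi"
      by (simp add: ennreal_mult[symmetric])
    finally show "(\<integral>\<^sup>+k. ennreal ((cmod (g k'))\<^sup>2 * gk R (k' - k) / 2) \<partial>lborel) = ennreal ((cmod (g k'))\<^sup>2) * ennreal pi" .
  qed
  also have "(\<integral>\<^sup>+k. ennreal ((cmod (g k))\<^sup>2) * ennreal pi \<partial>lborel) + (\<integral>\<^sup>+k. ennreal ((cmod (g k))\<^sup>2) * ennreal pi \<partial>lborel)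
      = ennreal (2*pi) * (\<integral>\<^sup>+k. ennreal ((cmod (g k))\<^sup>2) \<partial>lborel)"
  proof -
    have e: "(\<integral>\<^sup>+k. ennreal ((cmod (g k))\<^sup>2) * ennreal pi \<partial>lborel) = (\<integral>\<^sup>+k. ennreal ((cmod (g k))\<^sup>2) \<partial>lborel) * ennreal pi"
      by (rule nn_integral_multc) measurable
    have e2: "ennreal (2*pi) = 2 * ennreal pi" by (simp add: ennreal_mult)
    show ?thesis unfolding e e2 by (simp add: algebra_simps mult_2)
  qed
  finally show ?thesis using step1 by simp
qed



lemma gw_mono: "0 < R \<Longrightarrow> R \<le> R' \<Longrightarrow> gw R x \<le> gw R' x"
proof -
  assume R: "0 < R" "R \<le> R'"
  have "\<bar>x/R'\<bar> \<le> \<bar>x/R\<bar>" using R unfolding abs_divide by (intro divide_left_mono) auto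
  then have "(x/R')\<^sup>2 \<le> (x/R)\<^sup>2" by (metis abs_le_square_iff)
  then show ?thesis by (simp add: gw_def)
qed

lemma gw_lim: "(\<lambda>n. gw (real (Suc n)) x) \<longlonglongrightarrow> 1"
proof -
  have "(\<lambda>n. x * inverse (real (Suc n))) \<longlonglongrightarrow> 0"
    by (rule tendsto_mult_right_zero[OF LIMSEQ_inverse_real_of_nat])
  then have "(\<lambda>n. x / real (Suc n)) \<longlonglongrightarrow> 0" by (simp add: divide_inverse)
  then have "(\<lambda>n. exp (-(x / real (Suc n))\<^sup>2/2)) \<longlonglongrightarrow> exp (-(0)\<^sup>2/2)"
    by (intro tendsto_intros) auto
  then show ?thesis by (simp add: gw_def)
qed

lemma plancherel_ineq:
  assumes [measurable]: "g \<in> borel_measurable borel" and ig: "integrable lborel g"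
  shows "(\<integral>\<^sup>+x. ennreal ((cmod (ft g x))\<^sup>2) \<partial>lborel) \<le> ennreal (2*pi) * (\<integral>\<^sup>+k. ennreal ((cmod (g k))\<^sup>2) \<partial>lborel)"
proof -
  define N where "N = (LINT k|lborel. cmod (g k))"
  have Fb: "cmod (ft g x) \<le> N" for x unfolding N_def by (rule ft_bound[OF ig])
  have N0: "N \<ge> 0" unfolding N_def by simp
  have bnd: "(\<integral>\<^sup>+x. ennreal (gw R x * (cmod (ft g x))\<^sup>2) \<partial>lborel) \<le> ennreal (2*pi) * (\<integral>\<^sup>+k. ennreal ((cmod (g k))\<^sup>2) \<partial>lborel)"
    if R: "R > 0" for R
  proof -
    have igw: "integrable lborel (gw R)" using gw_integral[OF R] by (simp add: has_bochner_integral_iff)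
    have int: "integrable lborel (\<lambda>x. gw R x * (cmod (ft g x))\<^sup>2)"
    proof (rule Bochner_Integration.integrable_bound[where f="\<lambda>x. gw R x * N\<^sup>2"])
      show "integrable lborel (\<lambda>x. gw R x * N\<^sup>2)" using igw by simp
      show "AE x in lborel. norm (gw R x * (cmod (ft g x))\<^sup>2) \<le> norm (gw R x * N\<^sup>2)"
      proof (intro AE_I2)
        fix x
        have "(cmod (ft g x))\<^sup>2 \<le> N\<^sup>2" using Fb[of x] by (simp add: power_mono)
        then show "norm (gw R x * (cmod (ft g x))\<^sup>2) \<le> norm (gw R x * N\<^sup>2)"
          using gw_pos[of R x] by (simp add: abs_mult)
      qed
    qed measurable
    have "(\<integral>\<^sup>+x. ennreal (gw R x * (cmod (ft g x))\<^sup>2) \<partial>lborel) = ennreal (LINT x|lborel. gw R x * (cmod (ft g x))\<^sup>2)"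
      using gw_pos[of R] by (intro nn_integral_eq_integral int AE_I2) (simp add: less_imp_le)
    also have "(LINT x|lborel. gw R x * (cmod (ft g x))\<^sup>2) \<le>
        cmod (LINT k|lborel. cnj (g k) * (LINT k'|lborel. g k' * complex_of_real (gk R (k' - k))))"
      unfolding key_identity[OF assms R, symmetric] by simp
    then have "ennreal (LINT x|lborel. gw R x * (cmod (ft g x))\<^sup>2) \<le>
        ennreal (cmod (LINT k|lborel. cnj (g k) * (LINT k'|lborel. g k' * complex_of_real (gk R (k' - k)))))"
      by (rule ennreal_leI)
    also have "\<dots> \<le> ennreal (2*pi) * (\<integral>\<^sup>+k. ennreal ((cmod (g k))\<^sup>2) \<partial>lborel)"
      by (rule schur_bound[OF assms R])
    finally show ?thesis .
  qed
  define f where "f n x = ennreal (gw (real (Suc n)) x * (cmod (ft g x))\<^sup>2)" for n x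
  have inc: "incseq f"
    unfolding f_def
    by (intro incseq_SucI le_funI ennreal_leI mult_right_mono gw_mono) auto
  have sup: "(SUP n. f n x) = ennreal ((cmod (ft g x))\<^sup>2)" for x
  proof -
    have "incseq (\<lambda>n. f n x)" using inc by (auto simp: incseq_def le_fun_def)
    then have "(\<lambda>n. f n x) \<longlonglongrightarrow> (SUP n. f n x)" by (rule LIMSEQ_SUP)
    moreover have "(\<lambda>n. f n x) \<longlonglongrightarrow> ennreal (1 * (cmod (ft g x))\<^sup>2)"
      unfolding f_def by (intro tendsto_ennrealI tendsto_mult gw_lim tendsto_const)
    ultimately show ?thesis using LIMSEQ_unique by fastforce
  qed
  have "(\<integral>\<^sup>+x. ennreal ((cmod (ft g x))\<^sup>2) \<partial>lborel) = (\<integral>\<^sup>+x. (SUP n. f n x) \<partial>lborel)"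
    by (simp add: sup)
  also have "\<dots> = (SUP n. integral\<^sup>N lborel (f n))"
    by (rule nn_integral_monotone_convergence_SUP[OF inc]) (unfold f_def, measurable)
  also have "\<dots> \<le> ennreal (2*pi) * (\<integral>\<^sup>+k. ennreal ((cmod (g k))\<^sup>2) \<partial>lborel)"
  proof (intro SUP_least)
    fix n
    show "integral\<^sup>N lborel (f n) \<le> ennreal (2*pi) * (\<integral>\<^sup>+k. ennreal ((cmod (g k))\<^sup>2) \<partial>lborel)"
      unfolding f_def by (rule bnd) simp
  qed
  finally show ?thesis .
qed



lemma pred_atLeast_pair[measurable]: "Measurable.pred (borel \<Otimes>\<^sub>M borel) (\<lambda>x::real\<times>real. snd x \<in> {fst x..})"
  unfolding atLeast_iff by measurable

lemma pred_Icc_pair[measurable]: "Measurable.pred (borel \<Otimes>\<^sub>M borel) (\<lambda>x::real\<times>real. snd x \<in> {a..fst x})"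
  unfolding atLeastAtMost_iff by measurable

lemma op_pointwise:
  fixes \<theta>x g :: "real \<Rightarrow> complex"
  assumes c1: "c1_norm_le \<theta>x a b M" and ab: "a \<le> b"
    and [measurable]: "g \<in> borel_measurable borel" and ig: "integrable lborel g"
    and g0: "\<And>k. k \<notin> {a..b} \<Longrightarrow> g k = 0"
  shows "ennreal (cmod (LINT k|lborel. exp (\<i> * complex_of_real (k*x)) * \<theta>x k * g k))
     \<le> ennreal M * ennreal (cmod (ft g x)) +
        ennreal M * (\<integral>\<^sup>+t. indicator {a..b} t * ennreal (cmod (ft (\<lambda>k. indicator {t..} k * g k) x)) \<partial>lborel)"
proof -
  obtain \<theta>' where cont: "continuous_on {a..b} \<theta>'"
    and der: "\<And>k. k \<in> {a..b} \<Longrightarrow> (\<theta>x has_vector_derivative \<theta>' k) (at k within {a..b})"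
    and bnd: "\<And>k t. k \<in> {a..b} \<Longrightarrow> t \<in> {a..b} \<Longrightarrow> cmod (\<theta>x k) + cmod (\<theta>' t) \<le> M"
    using c1 unfolding c1_norm_le_def by blast
  have M0: "M \<ge> 0" using bnd[of a a] ab by (smt (verit) norm_ge_zero atLeastAtMost_iff)
  have tha: "cmod (\<theta>x a) \<le> M" using bnd[of a a] ab by (smt (verit) norm_ge_zero atLeastAtMost_iff)
  define D where "D t = indicator {a..b} t *\<^sub>R \<theta>' t" for t
  have Dm[measurable]: "D \<in> borel_measurable borel"
    unfolding D_def[abs_def] by (rule borel_measurable_continuous_on_indicator) (auto intro: cont)
  have gm2[measurable]: "g \<in> borel_measurable lborel" by simp
  have Dm2[measurable]: "D \<in> borel_measurable lborel" using Dm by simp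
  have pm[measurable]: "Measurable.pred (borel \<Otimes>\<^sub>M borel) (\<lambda>x. snd x \<in> {a..fst x})"
    unfolding atLeastAtMost_iff by measurable
  have Db: "cmod (D t) \<le> indicator {a..b} t * M" for t
    using bnd[of a t] ab by (auto simp: D_def indicator_def) (smt (verit) norm_ge_zero)
  define e where "e k = exp (\<i> * complex_of_real (k*x))" for k
  have em[measurable]: "e \<in> borel_measurable borel" unfolding e_def[abs_def] by measurable
  have ne[simp]: "cmod (e k) = 1" for k by (simp add: e_def)
  define F where "F t = ft (\<lambda>k. indicator {t..} k * g k) x" for t
  have FTC: "\<theta>x k = \<theta>x a + (LINT t|lborel. complex_of_real (indicator {a..k} t) * D t)" if k: "k \<in> {a..b}" for k
  proof -
    have "(LINT t|lborel. indicator {a..k} t *\<^sub>R \<theta>' t) = \<theta>x k - \<theta>x a"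
    proof (rule integral_FTC_atLeastAtMost)
      show "a \<le> k" using k by simp
      show "continuous_on {a..k} \<theta>'" using k by (auto intro: continuous_on_subset[OF cont])
      fix t assume "a \<le> t" "t \<le> k"
      then show "(\<theta>x has_vector_derivative \<theta>' t) (at t within {a..k})"
        using k by (intro has_vector_derivative_within_subset[OF der]) auto
    qed
    moreover have "(\<lambda>t. indicator {a..k} t *\<^sub>R \<theta>' t) = (\<lambda>t. complex_of_real (indicator {a..k} t) * D t)"
      using k by (auto simp: D_def indicator_def fun_eq_iff)
    ultimately show ?thesis by simp
  qed
  have prodint: "integrable (lborel \<Otimes>\<^sub>M lborel) (\<lambda>(k,t). e k * g k * (complex_of_real (indicator {a..k} t) * D t))"
  proof (rule prod_integrable[where a="\<lambda>k. cmod (g k)" and b="\<lambda>t. indicator {a..b} t * M"])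
    show "integrable lborel (\<lambda>k. cmod (g k))" using ig by simp
    show "integrable lborel (\<lambda>t. indicator {a..b} t * M)"
      using ab by (intro integrable_mult_left) (simp add: integrable_indicator_iff)
    have "cmod (e k * g k * (complex_of_real (indicator {a..k} t) * D t)) \<le> cmod (g k) * (indicator {a..b} t * M)" for k t
    proof -
      have "cmod (e k * g k * (complex_of_real (indicator {a..k} t) * D t)) = cmod (g k) * (indicator {a..k} t * cmod (D t))"
        by (simp add: norm_mult)
      also have "\<dots> \<le> cmod (g k) * (1 * cmod (D t))"
        by (intro mult_left_mono mult_right_mono) (auto simp: indicator_def)
      also have "\<dots> \<le> cmod (g k) * (indicator {a..b} t * M)"
        using Db[of t] by (intro mult_left_mono) auto
      finally show ?thesis .
    qed
    then show "\<And>k t. cmod (case (k,t) of (k,t) \<Rightarrow> e k * g k * (complex_of_real (indicator {a..k} t) * D t))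
        \<le> cmod (g k) * (indicator {a..b} t * M)" by simp
  qed measurable
  have eq1: "e k * \<theta>x k * g k = \<theta>x a * (e k * g k) + (LINT t|lborel. e k * g k * (complex_of_real (indicator {a..k} t) * D t))" for k
  proof (cases "k \<in> {a..b}")
    case True
    have "(LINT t|lborel. e k * g k * (complex_of_real (indicator {a..k} t) * D t))
       = e k * g k * (LINT t|lborel. complex_of_real (indicator {a..k} t) * D t)"
      by (rule integral_mult_right_zero)
    then show ?thesis by (simp only: FTC[OF True]) (simp add: algebra_simps)
  next
    case False
    then show ?thesis by (simp add: g0)
  qed
  have i1: "integrable lborel (\<lambda>k. \<theta>x a * (e k * g k))"
    using ig by (intro integrable_mult_right) (rule Bochner_Integration.integrable_bound[OF ig]; simp add: norm_mult)
  have i2: "integrable lborel (\<lambda>k. LINT t|lborel. e k * g k * (complex_of_real (indicator {a..k} t) * D t))"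
    using lborel_pair.integrable_fst[OF prodint] by simp
  have "(LINT k|lborel. e k * \<theta>x k * g k) = \<theta>x a * ft g x +
        (LINT k|lborel. LINT t|lborel. e k * g k * (complex_of_real (indicator {a..k} t) * D t))"
    unfolding eq1 using i1 i2 by (simp add: ft_def e_def)
  also have "(LINT k|lborel. LINT t|lborel. e k * g k * (complex_of_real (indicator {a..k} t) * D t))
      = (LINT t|lborel. LINT k|lborel. e k * g k * (complex_of_real (indicator {a..k} t) * D t))"
    using lborel_pair.Fubini_integral[OF prodint] by simp
  also have "\<dots> = (LINT t|lborel. D t * F t)"
  proof (rule Bochner_Integration.integral_cong[OF refl])
    fix t
    have pw: "e k * g k * (complex_of_real (indicator {a..k} t) * D t) = D t * (e k * (indicator {t..} k * g k))" for k
      by (cases "t \<in> {a..b}") (auto simp: D_def indicator_def)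
    then have "(LINT k|lborel. e k * g k * (complex_of_real (indicator {a..k} t) * D t))
        = (LINT k|lborel. D t * (e k * (indicator {t..} k * g k)))" by (simp only: pw)
    also have "\<dots> = D t * (LINT k|lborel. e k * (indicator {t..} k * g k))"
      by (rule integral_mult_right_zero)
    finally show "(LINT k|lborel. e k * g k * (complex_of_real (indicator {a..k} t) * D t)) = D t * F t"
      by (simp only: F_def ft_def e_def)
  qed
  finally have T: "(LINT k|lborel. e k * \<theta>x k * g k) = \<theta>x a * ft g x + (LINT t|lborel. D t * F t)" .
  have "ennreal (cmod (LINT t|lborel. D t * F t)) \<le> (\<integral>\<^sup>+t. ennreal (cmod (D t * F t)) \<partial>lborel)"
  proof (cases "integrable lborel (\<lambda>t. D t * F t)")
    case True then show ?thesis by (rule integral_norm_bound_ennreal)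
  next
    case False then show ?thesis by (simp add: not_integrable_integral_eq)
  qed
  also have "\<dots> \<le> (\<integral>\<^sup>+t. ennreal M * (indicator {a..b} t * ennreal (cmod (F t))) \<partial>lborel)"
  proof (intro nn_integral_mono)
    fix t
    have "cmod (D t * F t) \<le> (indicator {a..b} t * M) * cmod (F t)"
      using Db[of t] by (simp add: norm_mult mult_right_mono)
    then have "ennreal (cmod (D t * F t)) \<le> ennreal ((indicator {a..b} t * M) * cmod (F t))"
      by (rule ennreal_leI)
    also have "\<dots> = ennreal M * (indicator {a..b} t * ennreal (cmod (F t)))"
      using M0 by (cases "t \<in> {a..b}") (simp_all add: indicator_def ennreal_mult)
    finally show "ennreal (cmod (D t * F t)) \<le> ennreal M * (indicator {a..b} t * ennreal (cmod (F t)))" .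
  qed
  also have "\<dots> = ennreal M * (\<integral>\<^sup>+t. indicator {a..b} t * ennreal (cmod (F t)) \<partial>lborel)"
    by (rule nn_integral_cmult) (unfold F_def ft_def, measurable)
  finally have B: "ennreal (cmod (LINT t|lborel. D t * F t)) \<le> ennreal M * (\<integral>\<^sup>+t. indicator {a..b} t * ennreal (cmod (F t)) \<partial>lborel)" .
  define J where "J = (LINT t|lborel. D t * F t)"
  have "cmod (\<theta>x a * ft g x + J) \<le> cmod (\<theta>x a * ft g x) + cmod J" by (rule norm_triangle_ineq)
  also have "cmod (\<theta>x a * ft g x) \<le> M * cmod (ft g x)"
    unfolding norm_mult using tha by (rule mult_right_mono) simp
  finally have R: "cmod (\<theta>x a * ft g x + J) \<le> M * cmod (ft g x) + cmod J" by simp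
  have "ennreal (cmod (LINT k|lborel. e k * \<theta>x k * g k)) \<le> ennreal (M * cmod (ft g x) + cmod J)"
    unfolding T J_def[symmetric] using R by (rule ennreal_leI)
  also have "\<dots> = ennreal (M * cmod (ft g x)) + ennreal (cmod J)"
    using M0 by (intro ennreal_plus) auto
  also have "\<dots> \<le> ennreal M * ennreal (cmod (ft g x)) + ennreal M * (\<integral>\<^sup>+t. indicator {a..b} t * ennreal (cmod (F t)) \<partial>lborel)"
    using B M0 unfolding J_def by (intro add_mono) (auto simp: ennreal_mult)
  finally show ?thesis by (simp only: e_def F_def)
qed



lemma ennreal_sq_sum_le: fixes u v :: ennreal shows "(u + v)\<^sup>2 \<le> 2 * u\<^sup>2 + 2 * v\<^sup>2"
proof -
  have "(u + v)\<^sup>2 = u\<^sup>2 + v\<^sup>2 + 2 * u * v" by (rule power2_sum)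
  also have "\<dots> \<le> u\<^sup>2 + v\<^sup>2 + (u\<^sup>2 + v\<^sup>2)" by (intro add_left_mono sum_of_squares_ge_ennreal)
  also have "\<dots> = 2 * u\<^sup>2 + 2 * v\<^sup>2" by (simp add: mult_2 algebra_simps)
  finally show ?thesis .
qed

lemma ft_trunc_meas[measurable]:
  assumes [measurable]: "g \<in> borel_measurable borel"
  shows "(\<lambda>(x,t). ft (\<lambda>k. indicator {t..} k * g k) x) \<in> borel_measurable (borel \<Otimes>\<^sub>M borel)"
proof -
  have gm: "(\<lambda>x::(real\<times>real)\<times>real. g (snd x)) \<in> borel_measurable ((borel \<Otimes>\<^sub>M borel) \<Otimes>\<^sub>M borel)"
    by (rule measurable_compose[OF measurable_snd]) simp
  have pm: "Measurable.pred ((borel \<Otimes>\<^sub>M borel) \<Otimes>\<^sub>M borel) (\<lambda>x::(real\<times>real)\<times>real. snd x \<in> {snd (fst x)..})"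
    unfolding atLeast_iff by measurable
  have "(\<lambda>y. LINT k|lborel. exp (\<i> * complex_of_real (k * fst y)) * (indicator {snd y..} k * g k)) \<in> borel_measurable (borel \<Otimes>\<^sub>M borel)"
    using gm pm by measurable
  then show ?thesis by (simp add: ft_def case_prod_beta')
qed

lemma op_L2:
  fixes \<theta> :: "real \<Rightarrow> real \<Rightarrow> complex" and g :: "real \<Rightarrow> complex"
  assumes c1: "AE x in lborel. c1_norm_le (\<theta> x) a b M" and ab: "a \<le> b" and M0: "M \<ge> 0"
    and [measurable]: "g \<in> borel_measurable borel" and ig: "integrable lborel g"
    and g0: "\<And>k. k \<notin> {a..b} \<Longrightarrow> g k = 0"
  shows "(\<integral>\<^sup>+x. ennreal ((cmod (LINT k|lborel. exp (\<i> * complex_of_real (k*x)) * \<theta> x k * g k))\<^sup>2) \<partial>lborel)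
     \<le> ennreal (4*pi*M\<^sup>2*(1+(b-a)\<^sup>2)) * (\<integral>\<^sup>+k. ennreal ((cmod (g k))\<^sup>2) \<partial>lborel)"
proof -
  define G where "G = (\<integral>\<^sup>+k. ennreal ((cmod (g k))\<^sup>2) \<partial>lborel)"
  define F where "F x t = ft (\<lambda>k. indicator {t..} k * g k) x" for x t
  have Fm[measurable]: "(\<lambda>(x,t). F x t) \<in> borel_measurable (borel \<Otimes>\<^sub>M borel)"
    unfolding F_def by (rule ft_trunc_meas) simp
  have Fm2[measurable]: "(\<lambda>(x,t). F x t) \<in> borel_measurable (lborel \<Otimes>\<^sub>M lborel)"
    using Fm by simp
  have Fm1[measurable]: "F x \<in> borel_measurable borel" for x
    using measurable_Pair2[OF Fm, of x] by simp
  define A where "A x = ennreal (cmod (ft g x))" for x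
  define B where "B x = (\<integral>\<^sup>+t. indicator {a..b} t * ennreal (cmod (F x t)) \<partial>lborel)" for x
  define B2 where "B2 x = (\<integral>\<^sup>+t. indicator {a..b} t * ennreal ((cmod (F x t))\<^sup>2) \<partial>lborel)" for x
  have CS: "(B x)\<^sup>2 \<le> ennreal (b-a) * B2 x" for x
  proof -
    have "(B x)\<^sup>2 \<le> (\<integral>\<^sup>+t. (indicator {a..b} t :: ennreal)\<^sup>2 \<partial>lborel) *
        (\<integral>\<^sup>+t. (indicator {a..b} t * ennreal (cmod (F x t)))\<^sup>2 \<partial>lborel)"
    proof -
      have "B x = (\<integral>\<^sup>+t. indicator {a..b} t * (indicator {a..b} t * ennreal (cmod (F x t))) \<partial>lborel)"
        unfolding B_def by (intro nn_integral_cong) (auto simp: indicator_def)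
      then show ?thesis by (simp only:) (rule Cauchy_Schwarz_nn_integral; measurable)
    qed
    also have "(\<integral>\<^sup>+t. (indicator {a..b} t :: ennreal)\<^sup>2 \<partial>lborel) = ennreal (b-a)"
    proof -
      have "(\<lambda>t. (indicator {a..b} t :: ennreal)\<^sup>2) = indicator {a..b}"
        by (auto simp: indicator_def fun_eq_iff)
      then show ?thesis using ab by simp
    qed
    also have "(\<integral>\<^sup>+t. (indicator {a..b} t * ennreal (cmod (F x t)))\<^sup>2 \<partial>lborel) = B2 x"
      unfolding B2_def
      by (intro nn_integral_cong) (auto simp: indicator_def ennreal_power power_mult_distrib)
    finally show ?thesis .
  qed
  have pt: "ennreal ((cmod (LINT k|lborel. exp (\<i> * complex_of_real (k*x)) * \<theta> x k * g k))\<^sup>2)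
      \<le> ennreal (2*M\<^sup>2) * (A x)\<^sup>2 + ennreal (2*M\<^sup>2*(b-a)) * B2 x"
    if cx: "c1_norm_le (\<theta> x) a b M" for x
  proof -
    have "ennreal ((cmod (LINT k|lborel. exp (\<i> * complex_of_real (k*x)) * \<theta> x k * g k))\<^sup>2)
        = (ennreal (cmod (LINT k|lborel. exp (\<i> * complex_of_real (k*x)) * \<theta> x k * g k)))\<^sup>2"
      by (simp add: ennreal_power)
    also have "\<dots> \<le> (ennreal M * A x + ennreal M * B x)\<^sup>2"
      unfolding A_def B_def F_def
      by (intro power_mono op_pointwise[OF cx ab _ ig g0]) auto
    also have "\<dots> \<le> 2 * (ennreal M * A x)\<^sup>2 + 2 * (ennreal M * B x)\<^sup>2" by (rule ennreal_sq_sum_le)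
    also have "\<dots> \<le> 2 * (ennreal M)\<^sup>2 * (A x)\<^sup>2 + 2 * (ennreal M)\<^sup>2 * (ennreal (b-a) * B2 x)"
      using CS[of x] by (auto simp: power_mult_distrib mult.assoc intro!: mult_left_mono)
    also have "\<dots> = ennreal (2*M\<^sup>2) * (A x)\<^sup>2 + ennreal (2*M\<^sup>2*(b-a)) * B2 x"
      using M0 ab by (simp add: ennreal_mult ennreal_power mult.assoc)
    finally show ?thesis .
  qed
  have I1: "(\<integral>\<^sup>+x. (A x)\<^sup>2 \<partial>lborel) \<le> ennreal (2*pi) * G"
    unfolding A_def G_def using plancherel_ineq[OF _ ig] by (simp add: ennreal_power)
  have "(\<integral>\<^sup>+x. B2 x \<partial>lborel) = (\<integral>\<^sup>+t. indicator {a..b} t * (\<integral>\<^sup>+x. ennreal ((cmod (F x t))\<^sup>2) \<partial>lborel) \<partial>lborel)"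
    unfolding B2_def
    by (subst lborel_pair.Fubini') (measurable, simp add: nn_integral_cmult)
  also have "\<dots> \<le> (\<integral>\<^sup>+t. indicator {a..b} t * (ennreal (2*pi) * G) \<partial>lborel)"
  proof (intro nn_integral_mono mult_left_mono)
    fix t
    have it: "integrable lborel (\<lambda>k. indicator {t..} k * g k)"
      by (rule Bochner_Integration.integrable_bound[OF ig]) (auto simp: indicator_def norm_mult)
    have "(\<integral>\<^sup>+x. ennreal ((cmod (F x t))\<^sup>2) \<partial>lborel) \<le> ennreal (2*pi) * (\<integral>\<^sup>+k. ennreal ((cmod (indicator {t..} k * g k))\<^sup>2) \<partial>lborel)"
      unfolding F_def by (rule plancherel_ineq[OF _ it]) measurable
    also have "\<dots> \<le> ennreal (2*pi) * G"
      unfolding G_def by (intro mult_left_mono nn_integral_mono) (auto simp: indicator_def norm_mult)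
    finally show "(\<integral>\<^sup>+x. ennreal ((cmod (F x t))\<^sup>2) \<partial>lborel) \<le> ennreal (2*pi) * G" .
  qed simp
  also have "\<dots> = ennreal (b-a) * (ennreal (2*pi) * G)"
    using ab by (simp add: nn_integral_multc)
  finally have I2: "(\<integral>\<^sup>+x. B2 x \<partial>lborel) \<le> ennreal (b-a) * (ennreal (2*pi) * G)" .
  have "(\<integral>\<^sup>+x. ennreal ((cmod (LINT k|lborel. exp (\<i> * complex_of_real (k*x)) * \<theta> x k * g k))\<^sup>2) \<partial>lborel)
      \<le> (\<integral>\<^sup>+x. ennreal (2*M\<^sup>2) * (A x)\<^sup>2 + ennreal (2*M\<^sup>2*(b-a)) * B2 x \<partial>lborel)"
    by (intro nn_integral_mono_AE, rule AE_mp[OF c1], intro AE_I2 impI pt)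
  also have "\<dots> = ennreal (2*M\<^sup>2) * (\<integral>\<^sup>+x. (A x)\<^sup>2 \<partial>lborel) + ennreal (2*M\<^sup>2*(b-a)) * (\<integral>\<^sup>+x. B2 x \<partial>lborel)"
    unfolding A_def B2_def
    by (subst nn_integral_add) (measurable, simp add: nn_integral_cmult)
  also have "\<dots> \<le> ennreal (2*M\<^sup>2) * (ennreal (2*pi) * G) + ennreal (2*M\<^sup>2*(b-a)) * (ennreal (b-a) * (ennreal (2*pi) * G))"
    by (intro add_mono mult_left_mono I1 I2) simp_all
  also have "\<dots> = ennreal (4*pi*M\<^sup>2*(1+(b-a)\<^sup>2)) * G"
  proof -
    have e1: "ennreal (4*pi*M\<^sup>2) = ennreal (2*M\<^sup>2) * ennreal (2*pi)"
    proof -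
      have "4*pi*M\<^sup>2 = (2*M\<^sup>2)*(2*pi)" by simp
      then show ?thesis by (simp only:) (rule ennreal_mult; simp)
    qed
    have e2: "ennreal (4*pi*M\<^sup>2*(b-a)\<^sup>2) = ennreal (2*M\<^sup>2*(b-a)) * (ennreal (b-a) * ennreal (2*pi))"
    proof -
      have h1: "4*pi*M\<^sup>2*(b-a)\<^sup>2 = (2*M\<^sup>2*(b-a))*((b-a)*(2*pi))" by (simp add: power2_eq_square)
      have h2: "ennreal ((b-a)*(2*pi)) = ennreal (b-a) * ennreal (2*pi)"
        using ab by (intro ennreal_mult) auto
      have h3: "ennreal ((2*M\<^sup>2*(b-a))*((b-a)*(2*pi))) = ennreal (2*M\<^sup>2*(b-a)) * ennreal ((b-a)*(2*pi))"
        using ab M0 by (intro ennreal_mult) auto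
      show ?thesis unfolding h1 h3 h2 ..
    qed
    have e3: "ennreal (4*pi*M\<^sup>2*(1+(b-a)\<^sup>2)) = ennreal (4*pi*M\<^sup>2) + ennreal (4*pi*M\<^sup>2*(b-a)\<^sup>2)"
    proof -
      have "4*pi*M\<^sup>2*(1+(b-a)\<^sup>2) = 4*pi*M\<^sup>2 + 4*pi*M\<^sup>2*(b-a)\<^sup>2" by (simp add: algebra_simps)
      then show ?thesis by (simp only:) (rule ennreal_plus; simp)
    qed
    show ?thesis unfolding e1 e2 e3 by (simp only: distrib_right mult.assoc)
  qed
  finally show ?thesis unfolding G_def .
qed



lemma supp_integrable:
  fixes u :: "real \<Rightarrow> complex"
  assumes um: "u \<in> borel_measurable borel" and iu: "integrable lborel (\<lambda>k. (cmod (u k))\<^sup>2)"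
    and u0: "\<And>k. k \<notin> {a..b} \<Longrightarrow> u k = 0"
  shows "integrable lborel u"
proof (rule Bochner_Integration.integrable_bound[where f="\<lambda>k. indicator {a..b} k + (cmod (u k))\<^sup>2"])
  show "integrable lborel (\<lambda>k. indicator {a..b} k + (cmod (u k))\<^sup>2)"
    using iu by (intro Bochner_Integration.integrable_add) (auto simp: integrable_indicator_iff emeasure_lborel_Icc_eq)
  show "u \<in> borel_measurable lborel" using um by simp
  show "AE x in lborel. norm (u x) \<le> norm (indicator {a..b} x + (cmod (u x))\<^sup>2)"
  proof (intro AE_I2)
    fix x
    show "norm (u x) \<le> norm (indicator {a..b} x + (cmod (u x))\<^sup>2)"
    proof (cases "x \<in> {a..b}")
      case True
      define y where "y = cmod (u x)"
      have y0: "y \<ge> 0" unfolding y_def by simp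
      have "0 \<le> (y - 1)\<^sup>2" by simp
      then have "2*y \<le> y\<^sup>2 + 1" unfolding power2_diff by simp
      then have "cmod (u x) \<le> 1 + (cmod (u x))\<^sup>2" using y0 unfolding y_def by linarith
      then show ?thesis using True by simp
    next
      case False then show ?thesis using u0 by simp
    qed
  qed
qed

lemma c1_bound: "c1_norm_le f a b M \<Longrightarrow> k \<in> {a..b} \<Longrightarrow> cmod (f k) \<le> M"
proof -
  assume "c1_norm_le f a b M" "k \<in> {a..b}"
  then obtain f' where "\<forall>k\<in>{a..b}. \<forall>t\<in>{a..b}. cmod (f k) + cmod (f' t) \<le> M"
    unfolding c1_norm_le_def by blast
  then have "cmod (f k) + cmod (f' k) \<le> M" using \<open>k \<in> {a..b}\<close> by blast
  moreover have "cmod (f' k) \<ge> 0" by simp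
  ultimately show ?thesis by linarith
qed

lemma c1_M0: "c1_norm_le f a b M \<Longrightarrow> a \<le> b \<Longrightarrow> 0 \<le> M"
proof -
  assume "c1_norm_le f a b M" "a \<le> b"
  then have "cmod (f a) \<le> M" by (intro c1_bound) auto
  moreover have "cmod (f a) \<ge> 0" by simp
  ultimately show ?thesis by linarith
qed

lemma aux_inv: "s > 0 \<Longrightarrow> s\<^sup>2 = p \<Longrightarrow> (cmod (complex_of_real (inverse s)))\<^sup>2 = 1 / p"
  for s p :: real by (simp only: norm_of_real power2_abs) (simp add: power_inverse divide_inverse)
lemma c_sq: "(cmod (complex_of_real ((2*pi) powr (-1/2))))\<^sup>2 = 1 / (2*pi)"
proof -
  have "(2*pi) powr (-1/2) = (2*pi) powr (-(1/2))" by simp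
  also have "\<dots> = inverse ((2*pi) powr (1/2))" by (rule powr_minus)
  also have "(2*pi) powr (1/2) = sqrt (2*pi)" by (rule powr_half_sqrt) simp
  finally have e: "(2*pi) powr (-1/2) = inverse (sqrt (2*pi))" .
  show ?thesis unfolding e by (rule aux_inv) auto
qed

lemma AE_ex: fixes P :: "real \<Rightarrow> bool" shows "AE x in lborel. P x \<Longrightarrow> \<exists>x. P x"
proof (rule ccontr)
  assume a: "AE x in lborel. P x" and n: "\<not> (\<exists>x. P x)"
  have "P = (\<lambda>x. False)" using n by auto
  with a have "AE x::real in lborel. False" by simp
  then have "ae_filter lborel = (bot :: real filter)" using trivial_limit_def by blast
  then show False by (simp add: ae_filter_eq_bot_iff)
qed

lemma core:
  fixes \<phi> \<theta> :: "real \<Rightarrow> real \<Rightarrow> complex" and \<phi>0 h :: "real \<Rightarrow> complex" and w :: "real \<Rightarrow> real"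
  assumes bd: "bloch_data k0 \<kappa> M \<phi> \<phi>0 \<theta>" and \<kappa>0: "0 < \<kappa>"
    and wm[measurable]: "w \<in> borel_measurable borel"
    and w0: "\<And>k. \<kappa> < \<bar>k - k0\<bar> \<Longrightarrow> w k = 0"
    and wB: "\<And>k. \<bar>(k - k0) * w k\<bar> \<le> B"
    and hs: "sq_int h" and us: "sq_int (\<lambda>k. complex_of_real (w k) * h k)"
  shows "sq_int (diff_op \<phi> \<phi>0 (\<lambda>k. complex_of_real (w k) * h k)) \<and>
         L2norm (diff_op \<phi> \<phi>0 (\<lambda>k. complex_of_real (w k) * h k)) \<le> sqrt (2*(1+4*\<kappa>\<^sup>2)) * M * B * L2norm h"
proof -
  define a where "a = k0 - \<kappa>"
  define b where "b = k0 + \<kappa>"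
  have ab: "a \<le> b" using \<kappa>0 by (simp add: a_def b_def)
  have ba: "b - a = 2*\<kappa>" by (simp add: a_def b_def)
  have inab: "k \<in> {a..b} \<longleftrightarrow> \<bar>k - k0\<bar> \<le> \<kappa>" for k by (auto simp: a_def b_def abs_le_iff)
  have \<phi>m[measurable]: "(\<lambda>(x,k). \<phi> x k) \<in> borel_measurable (lborel \<Otimes>\<^sub>M lborel)"
   and \<phi>0m[measurable]: "\<phi>0 \<in> borel_measurable lborel"
   and \<theta>m[measurable]: "(\<lambda>(x,k). \<theta> x k) \<in> borel_measurable (lborel \<Otimes>\<^sub>M lborel)"
   and dec: "\<And>x k. \<bar>k - k0\<bar> \<le> \<kappa> \<Longrightarrow> \<phi> x k = \<phi>0 x + complex_of_real (k - k0) * \<theta> x k"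
   and c1: "AE x in lborel. c1_norm_le (\<theta> x) a b M"
    using bd unfolding bloch_data_def a_def b_def by auto
  have M0: "M \<ge> 0" using AE_ex[OF c1] c1_M0 ab by blast
  have B0: "B \<ge> 0" using wB[of k0] by simp
  define u where "u k = complex_of_real (w k) * h k" for k
  define g where "g k = complex_of_real (k - k0) * u k" for k
  have hm[measurable]: "h \<in> borel_measurable borel" using hs unfolding sq_int_def by simp
  have um[measurable]: "u \<in> borel_measurable borel" unfolding u_def[abs_def] by measurable
  have gm[measurable]: "g \<in> borel_measurable borel" unfolding g_def[abs_def] by measurable
  have u0: "u k = 0" if "k \<notin> {a..b}" for k
  proof -
    have "\<not> \<bar>k - k0\<bar> \<le> \<kappa>" using that inab[of k] by blast
    then have "w k = 0" by (intro w0) simp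
    then show ?thesis by (simp add: u_def)
  qed
  have g0: "g k = 0" if "k \<notin> {a..b}" for k using u0[OF that] by (simp add: g_def)
  have iu: "integrable lborel u"
    using us unfolding sq_int_def u_def[symmetric] by (intro supp_integrable[OF um _ u0]) auto
  have ig: "integrable lborel g"
  proof (rule Bochner_Integration.integrable_bound[where f="\<lambda>k. \<kappa> * cmod (u k)"])
    show "integrable lborel (\<lambda>k. \<kappa> * cmod (u k))" using iu by simp
    show "g \<in> borel_measurable lborel" by simp
    show "AE x in lborel. norm (g x) \<le> norm (\<kappa> * cmod (u x))"
    proof (intro AE_I2)
      fix k
      show "norm (g k) \<le> norm (\<kappa> * cmod (u k))"
      proof (cases "k \<in> {a..b}")
        case True
        then have "\<bar>k - k0\<bar> \<le> \<kappa>" using inab by simp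
        then show ?thesis using \<kappa>0 unfolding g_def norm_mult norm_of_real by (simp add: mult_right_mono)
      next
        case False then show ?thesis by (simp add: g0)
      qed
    qed
  qed
  have gh: "(cmod (g k))\<^sup>2 \<le> B\<^sup>2 * (cmod (h k))\<^sup>2" for k
  proof -
    have "cmod (g k) = \<bar>(k - k0) * w k\<bar> * cmod (h k)"
      unfolding g_def u_def norm_mult norm_of_real by (simp add: abs_mult)
    also have "\<dots> \<le> B * cmod (h k)" using wB[of k] by (rule mult_right_mono) simp
    finally have "cmod (g k) \<le> B * cmod (h k)" .
    then have "(cmod (g k))\<^sup>2 \<le> (B * cmod (h k))\<^sup>2" by (intro power_mono) auto
    then show ?thesis by (simp add: power_mult_distrib)
  qed
  define c where "c = complex_of_real ((2*pi) powr (-1/2))"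
  define T where "T x = (LINT k|lborel. exp (\<i> * complex_of_real (k*x)) * \<theta> x k * g k)" for x
  define D where "D = diff_op \<phi> \<phi>0 u"
  have Dm[measurable]: "D \<in> borel_measurable lborel"
    unfolding D_def diff_op_def[abs_def] Psi_adj_def[abs_def] Phi_adj_def[abs_def] by measurable
  have Tm[measurable]: "T \<in> borel_measurable lborel"
    unfolding T_def[abs_def] by measurable
  have DT: "AE x in lborel. D x = c * T x"
  proof (rule AE_mp[OF c1], intro AE_I2 impI)
    fix x assume cx: "c1_norm_le (\<theta> x) a b M"
    have \<theta>xm[measurable]: "(\<lambda>k. \<theta> x k) \<in> borel_measurable lborel"
      using measurable_Pair2[OF \<theta>m, of x] by simp
    define e where "e k = exp (\<i> * complex_of_real (k*x))" for k
    have em[measurable]: "e \<in> borel_measurable lborel" unfolding e_def[abs_def] by measurable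
    have pw: "e k * \<phi> x k * u k = \<phi>0 x * (e k * u k) + e k * \<theta> x k * g k" for k
    proof (cases "\<bar>k - k0\<bar> \<le> \<kappa>")
      case True
      then show ?thesis by (simp add: dec g_def algebra_simps)
    next
      case False
      then have "u k = 0" using u0 inab by blast
      then show ?thesis by (simp add: g_def)
    qed
    have i1: "integrable lborel (\<lambda>k. \<phi>0 x * (e k * u k))"
      by (intro integrable_mult_right Bochner_Integration.integrable_bound[OF iu]) (auto simp: norm_mult e_def)
    have i2: "integrable lborel (\<lambda>k. e k * \<theta> x k * g k)"
    proof (rule Bochner_Integration.integrable_bound[where f="\<lambda>k. M * cmod (g k)"])
      show "integrable lborel (\<lambda>k. M * cmod (g k))" using ig by simp
      show "(\<lambda>k. e k * \<theta> x k * g k) \<in> borel_measurable lborel" by measurable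
      show "AE k in lborel. norm (e k * \<theta> x k * g k) \<le> norm (M * cmod (g k))"
      proof (intro AE_I2)
        fix k
        show "norm (e k * \<theta> x k * g k) \<le> norm (M * cmod (g k))"
        proof (cases "k \<in> {a..b}")
          case True
          then have "cmod (\<theta> x k) \<le> M" by (rule c1_bound[OF cx])
          then show ?thesis using M0 by (simp add: norm_mult e_def mult_right_mono)
        next
          case False then show ?thesis by (simp add: g0)
        qed
      qed
    qed
    have "(LINT k|lborel. e k * \<phi> x k * u k) = \<phi>0 x * (LINT k|lborel. e k * u k) + T x"
      unfolding pw T_def e_def[symmetric] using i1 i2 by simp
    then show "D x = c * T x"
      unfolding D_def diff_op_def Psi_adj_def Phi_adj_def c_def[symmetric] e_def[symmetric]
      by (simp add: algebra_simps)
  qed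
  define H where "H = (LINT k|lborel. (cmod (h k))\<^sup>2)"
  have ih: "integrable lborel (\<lambda>k. (cmod (h k))\<^sup>2)" using hs unfolding sq_int_def by simp
  have H0: "H \<ge> 0" unfolding H_def by simp
  have nH: "(\<integral>\<^sup>+k. ennreal ((cmod (h k))\<^sup>2) \<partial>lborel) = ennreal H"
    unfolding H_def using ih by (intro nn_integral_eq_integral) auto
  have G: "(\<integral>\<^sup>+k. ennreal ((cmod (g k))\<^sup>2) \<partial>lborel) \<le> ennreal (B\<^sup>2) * ennreal H"
  proof -
    have "(\<integral>\<^sup>+k. ennreal ((cmod (g k))\<^sup>2) \<partial>lborel) \<le> (\<integral>\<^sup>+k. ennreal (B\<^sup>2) * ennreal ((cmod (h k))\<^sup>2) \<partial>lborel)"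
      by (intro nn_integral_mono) (simp add: ennreal_mult[symmetric] gh ennreal_leI)
    also have "\<dots> = ennreal (B\<^sup>2) * ennreal H"
      by (subst nn_integral_cmult) (auto simp: nH)
    finally show ?thesis .
  qed
  define K where "K = 2 * M\<^sup>2 * (1 + 4*\<kappa>\<^sup>2) * B\<^sup>2 * H"
  have K0: "K \<ge> 0" unfolding K_def using H0 by simp
  have ND: "(\<integral>\<^sup>+x. ennreal ((cmod (D x))\<^sup>2) \<partial>lborel) \<le> ennreal K"
  proof -
    have "(\<integral>\<^sup>+x. ennreal ((cmod (D x))\<^sup>2) \<partial>lborel) = (\<integral>\<^sup>+x. ennreal (1/(2*pi)) * ennreal ((cmod (T x))\<^sup>2) \<partial>lborel)"
    proof (rule nn_integral_cong_AE)
      show "AE x in lborel. ennreal ((cmod (D x))\<^sup>2) = ennreal (1/(2*pi)) * ennreal ((cmod (T x))\<^sup>2)"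
      proof (rule AE_mp[OF DT], intro AE_I2 impI)
        fix x assume "D x = c * T x"
        then have "(cmod (D x))\<^sup>2 = (cmod c)\<^sup>2 * (cmod (T x))\<^sup>2"
          by (simp only: norm_mult power_mult_distrib)
        then have "(cmod (D x))\<^sup>2 = (1/(2*pi)) * (cmod (T x))\<^sup>2"
          by (simp only: c_def c_sq)
        then show "ennreal ((cmod (D x))\<^sup>2) = ennreal (1/(2*pi)) * ennreal ((cmod (T x))\<^sup>2)"
          by (simp add: ennreal_mult[symmetric])
      qed
    qed
    also have "\<dots> = ennreal (1/(2*pi)) * (\<integral>\<^sup>+x. ennreal ((cmod (T x))\<^sup>2) \<partial>lborel)"
      by (rule nn_integral_cmult) measurable
    also have "\<dots> \<le> ennreal (1/(2*pi)) * (ennreal (4*pi*M\<^sup>2*(1+(b-a)\<^sup>2)) * (ennreal (B\<^sup>2) * ennreal H))"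
    proof (intro mult_left_mono order_trans[OF _ mult_left_mono[OF G]])
      show "(\<integral>\<^sup>+x. ennreal ((cmod (T x))\<^sup>2) \<partial>lborel) \<le> ennreal (4*pi*M\<^sup>2*(1+(b-a)\<^sup>2)) * (\<integral>\<^sup>+k. ennreal ((cmod (g k))\<^sup>2) \<partial>lborel)"
        unfolding T_def by (rule op_L2[OF c1 ab M0 gm ig g0])
    qed auto
    also have "\<dots> = ennreal K"
    proof -
      have "(1/(2*pi)) * ((4*pi*M\<^sup>2*(1+(b-a)\<^sup>2)) * (B\<^sup>2 * H)) = K"
        unfolding K_def ba by (simp add: field_simps power_mult_distrib)
      moreover have "ennreal (1/(2*pi)) * (ennreal (4*pi*M\<^sup>2*(1+(b-a)\<^sup>2)) * (ennreal (B\<^sup>2) * ennreal H))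
          = ennreal ((1/(2*pi)) * ((4*pi*M\<^sup>2*(1+(b-a)\<^sup>2)) * (B\<^sup>2 * H)))"
      proof -
        have q0: "0 \<le> 4*pi*M\<^sup>2*(1+(b-a)\<^sup>2)" by simp
        have e1: "ennreal (B\<^sup>2) * ennreal H = ennreal (B\<^sup>2 * H)"
          by (rule ennreal_mult[symmetric]) (simp_all add: H0)
        have e2: "ennreal (4*pi*M\<^sup>2*(1+(b-a)\<^sup>2)) * ennreal (B\<^sup>2 * H) = ennreal ((4*pi*M\<^sup>2*(1+(b-a)\<^sup>2)) * (B\<^sup>2 * H))"
          by (rule ennreal_mult[symmetric]) (simp_all add: H0)
        have e3: "ennreal (1/(2*pi)) * ennreal ((4*pi*M\<^sup>2*(1+(b-a)\<^sup>2)) * (B\<^sup>2 * H)) = ennreal ((1/(2*pi)) * ((4*pi*M\<^sup>2*(1+(b-a)\<^sup>2)) * (B\<^sup>2 * H)))"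
          by (rule ennreal_mult[symmetric]) (use q0 H0 in simp_all)
        show ?thesis by (simp only: e1 e2 e3)
      qed
      ultimately show ?thesis by simp
    qed
    finally show ?thesis .
  qed
  have iD: "integrable lborel (\<lambda>x. (cmod (D x))\<^sup>2)"
  proof (rule integrableI_bounded)
    show "(\<lambda>x. (cmod (D x))\<^sup>2) \<in> borel_measurable lborel" by measurable
    have "(\<integral>\<^sup>+x. ennreal (norm ((cmod (D x))\<^sup>2)) \<partial>lborel) = (\<integral>\<^sup>+x. ennreal ((cmod (D x))\<^sup>2) \<partial>lborel)"
      by simp
    also have "\<dots> < \<infinity>" using ND by (simp add: le_less_trans)
    finally show "(\<integral>\<^sup>+x. ennreal (norm ((cmod (D x))\<^sup>2)) \<partial>lborel) < \<infinity>" .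
  qed
  have "ennreal (LINT x|lborel. (cmod (D x))\<^sup>2) = (\<integral>\<^sup>+x. ennreal ((cmod (D x))\<^sup>2) \<partial>lborel)"
    using iD by (intro nn_integral_eq_integral[symmetric]) auto
  with ND have "ennreal (LINT x|lborel. (cmod (D x))\<^sup>2) \<le> ennreal K" by simp
  then have LD: "(LINT x|lborel. (cmod (D x))\<^sup>2) \<le> K" using K0 by (simp add: ennreal_le_iff)
  have "L2norm D \<le> sqrt K" unfolding L2norm_def using LD by simp
  also have "sqrt K = sqrt (2*(1+4*\<kappa>\<^sup>2)) * M * B * L2norm h"
  proof -
    have "K = (2*(1+4*\<kappa>\<^sup>2)) * (M*B)\<^sup>2 * H" unfolding K_def by (simp add: power_mult_distrib)
    then have "sqrt K = sqrt (2*(1+4*\<kappa>\<^sup>2)) * sqrt ((M*B)\<^sup>2) * sqrt H" by (simp add: real_sqrt_mult)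
    also have "sqrt ((M*B)\<^sup>2) = M * B" using M0 B0 by simp
    finally show ?thesis unfolding L2norm_def H_def by simp
  qed
  finally have L: "L2norm D \<le> sqrt (2*(1+4*\<kappa>\<^sup>2)) * M * B * L2norm h" .
  have "sq_int D" unfolding sq_int_def using iD by simp
  with L show ?thesis unfolding D_def u_def by simp
qed



lemma rho_powr: fixes s q :: real assumes "s > 0" shows "s powr (-q/2) = (sqrt s) powr (-q)"
proof -
  have "sqrt s = s powr (1/2)" using assms by (simp add: powr_half_sqrt)
  then have "(sqrt s) powr (-q) = s powr ((1/2) * (-q))" by (simp add: powr_powr)
  then show ?thesis by simp
qed

lemma eps_rho_le1:
  fixes e rho q :: real assumes "0 < e" "e \<le> rho" "q \<ge> 0"
  shows "e powr q * rho powr (-q) \<le> 1"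
proof -
  have "rho powr (-q) \<le> e powr (-q)" using assms by (intro powr_mono2') auto
  then have "e powr q * rho powr (-q) \<le> e powr q * e powr (-q)" by (intro mult_left_mono) auto
  also have "\<dots> = 1" using assms by (simp add: powr_add[symmetric])
  finally show ?thesis .
qed

lemma cut1_le1:
  assumes "q \<ge> 0" "0 < \<epsilon>"
  shows "\<bar>cut1 q \<epsilon> k0 \<kappa> k\<bar> \<le> 1"
proof -
  define s where "s = (k - k0)\<^sup>2 + \<epsilon>\<^sup>2"
  have s0: "s > 0" using assms by (simp add: s_def add_nonneg_pos)
  have es: "\<epsilon> \<le> sqrt s" using assms by (intro real_le_rsqrt) (simp add: s_def)
  have "\<epsilon> powr q * s powr (-q/2) \<le> 1"
    unfolding rho_powr[OF s0] using assms es by (intro eps_rho_le1) auto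
  moreover have "\<epsilon> powr q * s powr (-q/2) \<ge> 0" by simp
  ultimately show ?thesis unfolding cut1_def s_def[symmetric]
    by (auto simp: indicator_def)
qed

lemma cut1_bound:
  assumes q: "q \<ge> 0" and e: "0 < \<epsilon>" and \<kappa>: "0 < \<kappa>"
  shows "\<bar>(k - k0) * cut1 q \<epsilon> k0 \<kappa> k\<bar> \<le> (1 + \<kappa>) * \<epsilon> powr (min 1 q)"
proof (cases "\<bar>k - k0\<bar> \<le> \<kappa>")
  case False
  then show ?thesis using \<kappa> by (simp add: cut1_def indicator_def)
next
  case True
  define t where "t = \<bar>k - k0\<bar>"
  define s where "s = (k - k0)\<^sup>2 + \<epsilon>\<^sup>2"
  define \<rho> where "\<rho> = sqrt s"
  have t0: "t \<ge> 0" and tk: "t \<le> \<kappa>" using True by (auto simp: t_def)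
  have s0: "s > 0" using e by (simp add: s_def add_nonneg_pos)
  have r0: "\<rho> > 0" using s0 by (simp add: \<rho>_def)
  have er: "\<epsilon> \<le> \<rho>" unfolding \<rho>_def using e by (intro real_le_rsqrt) (simp add: s_def)
  have tr: "t \<le> \<rho>" unfolding \<rho>_def t_def by (intro real_le_rsqrt) (simp add: s_def)
  have eq: "\<bar>(k - k0) * cut1 q \<epsilon> k0 \<kappa> k\<bar> = t * (\<epsilon> powr q * \<rho> powr (-q))"
    using True unfolding cut1_def s_def[symmetric] t_def \<rho>_def rho_powr[OF s0] by (simp add: abs_mult)
  show ?thesis
  proof (cases "q \<ge> 1")
    case True
    have "t * (\<epsilon> powr q * \<rho> powr (-q)) \<le> \<rho> * (\<epsilon> powr q * \<rho> powr (-q))"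
      using tr by (intro mult_right_mono) auto
    also have "\<dots> = \<epsilon> powr q * \<rho> powr (1 - q)"
    proof -
      have "\<rho> powr (1 + (-q)) = \<rho> powr 1 * \<rho> powr (-q)" by (rule powr_add)
      then have "\<rho> powr (1 - q) = \<rho> * \<rho> powr (-q)" using r0 by simp
      then show ?thesis by (simp add: mult_ac)
    qed
    also have "\<dots> \<le> \<epsilon> powr q * \<epsilon> powr (1 - q)"
      using True e er by (intro mult_left_mono powr_mono2') auto
    also have "\<dots> = \<epsilon>" using e by (simp add: powr_add[symmetric])
    also have "\<dots> \<le> (1 + \<kappa>) * \<epsilon> powr (min 1 q)" using True e \<kappa> by simp
    finally show ?thesis unfolding eq .
  next
    case False
    show ?thesis
    proof (cases "t = 0")
      case True then show ?thesis unfolding eq using \<kappa> by simp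
    next
      case tnz: False
      then have tp: "t > 0" using t0 by simp
      have "t * (\<epsilon> powr q * \<rho> powr (-q)) \<le> t * (\<epsilon> powr q * t powr (-q))"
        using tp tr q by (intro mult_left_mono powr_mono2') auto
      also have "\<dots> = \<epsilon> powr q * t powr (1 - q)"
      proof -
        have "t powr (1 + (-q)) = t powr 1 * t powr (-q)" by (rule powr_add)
        then have "t powr (1 - q) = t * t powr (-q)" using tp by simp
        then show ?thesis by (simp add: mult_ac)
      qed
      also have "\<dots> \<le> \<epsilon> powr q * (1 + \<kappa>) powr (1 - q)"
        using False tk t0 by (intro mult_left_mono powr_mono2) auto
      also have "\<dots> \<le> \<epsilon> powr q * (1 + \<kappa>) powr 1"
        using q \<kappa> by (intro mult_left_mono powr_mono) auto
      also have "\<dots> = (1 + \<kappa>) * \<epsilon> powr (min 1 q)"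
        using False \<kappa> by simp
      finally show ?thesis unfolding eq by simp
    qed
  qed
qed

lemma cut2_bound:
  assumes r: "r \<ge> -1" and e: "0 < \<epsilon>" "\<epsilon> \<le> 1" and \<kappa>: "0 < \<kappa>"
  shows "\<bar>(k - k0) * cut2 r \<epsilon> k0 \<kappa> k\<bar> \<le> (1 + \<kappa>) * \<epsilon> powr (min 0 r)"
proof (cases "\<bar>k - k0\<bar> \<le> \<kappa> \<and> k \<noteq> k0")
  case False
  then have "(k - k0) * cut2 r \<epsilon> k0 \<kappa> k = 0" by (auto simp: cut2_def indicator_def)
  moreover have "0 \<le> (1 + \<kappa>) * \<epsilon> powr (min 0 r)" using \<kappa> by simp
  ultimately show ?thesis by (simp only: abs_zero)
next
  case True
  define t where "t = \<bar>k - k0\<bar>"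
  define s where "s = (k - k0)\<^sup>2 + \<epsilon>\<^sup>2"
  define \<rho> where "\<rho> = sqrt s"
  have tp: "t > 0" and tk: "t \<le> \<kappa>" using True by (auto simp: t_def)
  have s0: "s > 0" using e by (simp add: s_def add_nonneg_pos)
  have r0: "\<rho> > 0" using s0 by (simp add: \<rho>_def)
  have er: "\<epsilon> \<le> \<rho>" unfolding \<rho>_def using e by (intro real_le_rsqrt) (simp add: s_def)
  have rk: "\<rho> \<le> 1 + \<kappa>"
  proof -
    have "\<bar>k - k0\<bar>\<^sup>2 \<le> \<kappa>\<^sup>2" using tk unfolding t_def by (intro power_mono) auto
    then have a1: "(k - k0)\<^sup>2 \<le> \<kappa>\<^sup>2" by (simp only: power2_abs)
    have a2: "\<epsilon>\<^sup>2 \<le> 1" using e by (simp add: power_le_one)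
    have a3: "(1 + \<kappa>)\<^sup>2 = 1 + 2*\<kappa> + \<kappa>\<^sup>2" by (simp add: power2_sum)
    have "s \<le> (1 + \<kappa>)\<^sup>2" unfolding s_def using a1 a2 a3 \<kappa> by linarith
    then have "sqrt s \<le> sqrt ((1 + \<kappa>)\<^sup>2)" by (rule real_sqrt_le_mono)
    also have "sqrt ((1 + \<kappa>)\<^sup>2) = 1 + \<kappa>" using \<kappa> by simp
    finally show ?thesis unfolding \<rho>_def .
  qed
  have eq: "\<bar>(k - k0) * cut2 r \<epsilon> k0 \<kappa> k\<bar> = \<epsilon> powr r * \<rho> powr (-r)"
  proof -
    have "\<bar>(k - k0) * cut2 r \<epsilon> k0 \<kappa> k\<bar> = t * (\<epsilon> powr r * \<rho> powr (-r)) * inverse t"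
      using True unfolding cut2_def s_def[symmetric] t_def \<rho>_def rho_powr[OF s0] by (simp add: abs_mult)
    then show ?thesis using tp by simp
  qed
  show ?thesis
  proof (cases "r \<ge> 0")
    case True
    have "\<epsilon> powr r * \<rho> powr (-r) \<le> 1" using e er True by (intro eps_rho_le1) auto
    also have "1 \<le> (1 + \<kappa>) * \<epsilon> powr (min 0 r)" using True e \<kappa> by simp
    finally show ?thesis unfolding eq .
  next
    case False
    have "\<rho> powr (-r) \<le> (1 + \<kappa>) powr (-r)" using False rk r0 by (intro powr_mono2) auto
    also have "\<dots> \<le> (1 + \<kappa>) powr 1" using r \<kappa> by (intro powr_mono) auto
    finally have "\<epsilon> powr r * \<rho> powr (-r) \<le> \<epsilon> powr r * (1 + \<kappa>) powr 1" by (intro mult_left_mono) auto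
    also have "\<dots> = (1 + \<kappa>) * \<epsilon> powr (min 0 r)" using False \<kappa> by simp
    finally show ?thesis unfolding eq .
  qed
qed



lemma cut1_meas[measurable]: "cut1 q \<epsilon> k0 \<kappa> \<in> borel_measurable borel"
  unfolding cut1_def[abs_def] by measurable

lemma cut2_meas[measurable]: "cut2 r \<epsilon> k0 \<kappa> \<in> borel_measurable borel"
  unfolding cut2_def[abs_def] by measurable

theorem lemma1:
  shows "(\<forall>q::real. q \<ge> 0 \<longrightarrow> (\<forall>\<kappa>. 0 < \<kappa> \<and> \<kappa> < pi \<longrightarrow> (\<forall>M::real. \<exists>C::real.
            \<forall>k0 \<phi> \<phi>0 \<theta>. k0 \<in> {0, pi} \<and> bloch_data k0 \<kappa> M \<phi> \<phi>0 \<theta> \<longrightarrow>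
              (\<forall>\<epsilon>::real. 0 < \<epsilon> \<and> \<epsilon> \<le> 1 \<longrightarrow> (\<forall>h. sq_int h \<longrightarrow>
                 sq_int (diff_op \<phi> \<phi>0 (\<lambda>k. complex_of_real (cut1 q \<epsilon> k0 \<kappa> k) * h k)) \<and>
                 L2norm (diff_op \<phi> \<phi>0 (\<lambda>k. complex_of_real (cut1 q \<epsilon> k0 \<kappa> k) * h k))
                   \<le> C * \<epsilon> powr (min 1 q) * L2norm h)))))
   \<and> (\<forall>r::real. r \<ge> -1 \<longrightarrow> (\<forall>\<kappa>. 0 < \<kappa> \<and> \<kappa> < pi \<longrightarrow> (\<forall>M::real. \<exists>C::real.
            \<forall>k0 \<phi> \<phi>0 \<theta>. k0 \<in> {0, pi} \<and> bloch_data k0 \<kappa> M \<phi> \<phi>0 \<theta> \<longrightarrow>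
              (\<forall>\<epsilon>::real. 0 < \<epsilon> \<and> \<epsilon> \<le> 1 \<longrightarrow> (\<forall>h. sq_int h \<longrightarrow>
                 sq_int (\<lambda>k. complex_of_real (cut2 r \<epsilon> k0 \<kappa> k) * h k) \<longrightarrow>
                 sq_int (diff_op \<phi> \<phi>0 (\<lambda>k. complex_of_real (cut2 r \<epsilon> k0 \<kappa> k) * h k)) \<and>
                 L2norm (diff_op \<phi> \<phi>0 (\<lambda>k. complex_of_real (cut2 r \<epsilon> k0 \<kappa> k) * h k))
                   \<le> C * \<epsilon> powr (min 0 r) * L2norm h)))))"
proof (intro conjI allI impI)
  fix q \<kappa> M :: real
  assume q: "q \<ge> 0" and \<kappa>: "0 < \<kappa> \<and> \<kappa> < pi"
  show "\<exists>C::real. \<forall>k0 \<phi> \<phi>0 \<theta>. k0 \<in> {0, pi} \<and> bloch_data k0 \<kappa> M \<phi> \<phi>0 \<theta> \<longrightarrow>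
              (\<forall>\<epsilon>::real. 0 < \<epsilon> \<and> \<epsilon> \<le> 1 \<longrightarrow> (\<forall>h. sq_int h \<longrightarrow>
                 sq_int (diff_op \<phi> \<phi>0 (\<lambda>k. complex_of_real (cut1 q \<epsilon> k0 \<kappa> k) * h k)) \<and>
                 L2norm (diff_op \<phi> \<phi>0 (\<lambda>k. complex_of_real (cut1 q \<epsilon> k0 \<kappa> k) * h k))
                   \<le> C * \<epsilon> powr (min 1 q) * L2norm h))"
  proof (intro exI[of _ "sqrt (2*(1+4*\<kappa>\<^sup>2)) * M * (1+\<kappa>)"] allI impI)
    fix k0 \<epsilon> :: real and \<phi> \<theta> :: "real \<Rightarrow> real \<Rightarrow> complex" and \<phi>0 h :: "real \<Rightarrow> complex"
    assume bd: "k0 \<in> {0, pi} \<and> bloch_data k0 \<kappa> M \<phi> \<phi>0 \<theta>" and e: "0 < \<epsilon> \<and> \<epsilon> \<le> 1" and hs: "sq_int h"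
    have hm[measurable]: "h \<in> borel_measurable borel" using hs unfolding sq_int_def by simp
    have us: "sq_int (\<lambda>k. complex_of_real (cut1 q \<epsilon> k0 \<kappa> k) * h k)"
      unfolding sq_int_def
    proof
      show "(\<lambda>k. complex_of_real (cut1 q \<epsilon> k0 \<kappa> k) * h k) \<in> borel_measurable lborel" by simp
      show "integrable lborel (\<lambda>x. (cmod (complex_of_real (cut1 q \<epsilon> k0 \<kappa> x) * h x))\<^sup>2)"
      proof (rule Bochner_Integration.integrable_bound[where f="\<lambda>x. (cmod (h x))\<^sup>2"])
        show "integrable lborel (\<lambda>x. (cmod (h x))\<^sup>2)" using hs unfolding sq_int_def by simp
        show "(\<lambda>x. (cmod (complex_of_real (cut1 q \<epsilon> k0 \<kappa> x) * h x))\<^sup>2) \<in> borel_measurable lborel" by simp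
        show "AE x in lborel. norm ((cmod (complex_of_real (cut1 q \<epsilon> k0 \<kappa> x) * h x))\<^sup>2) \<le> norm ((cmod (h x))\<^sup>2)"
        proof (intro AE_I2)
          fix x
          have "\<bar>cut1 q \<epsilon> k0 \<kappa> x\<bar> \<le> 1" using q e by (intro cut1_le1) auto
          then have "\<bar>cut1 q \<epsilon> k0 \<kappa> x\<bar> * cmod (h x) \<le> 1 * cmod (h x)" by (intro mult_right_mono) auto
          then have "(\<bar>cut1 q \<epsilon> k0 \<kappa> x\<bar> * cmod (h x))\<^sup>2 \<le> (cmod (h x))\<^sup>2" by (intro power_mono) auto
          then show "norm ((cmod (complex_of_real (cut1 q \<epsilon> k0 \<kappa> x) * h x))\<^sup>2) \<le> norm ((cmod (h x))\<^sup>2)"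
            by (simp add: norm_mult)
        qed
      qed
    qed
    have c: "sq_int (diff_op \<phi> \<phi>0 (\<lambda>k. complex_of_real (cut1 q \<epsilon> k0 \<kappa> k) * h k)) \<and>
         L2norm (diff_op \<phi> \<phi>0 (\<lambda>k. complex_of_real (cut1 q \<epsilon> k0 \<kappa> k) * h k))
           \<le> sqrt (2*(1+4*\<kappa>\<^sup>2)) * M * ((1+\<kappa>) * \<epsilon> powr (min 1 q)) * L2norm h"
    proof (rule core[OF conjunct2[OF bd] _ cut1_meas _ _ hs us])
      show "0 < \<kappa>" using \<kappa> by simp
      show "\<And>k. \<kappa> < \<bar>k - k0\<bar> \<Longrightarrow> cut1 q \<epsilon> k0 \<kappa> k = 0" by (simp add: cut1_def indicator_def)
      show "\<And>k. \<bar>(k - k0) * cut1 q \<epsilon> k0 \<kappa> k\<bar> \<le> (1+\<kappa>) * \<epsilon> powr (min 1 q)"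
        using q e \<kappa> by (intro cut1_bound) auto
    qed
    then show "sq_int (diff_op \<phi> \<phi>0 (\<lambda>k. complex_of_real (cut1 q \<epsilon> k0 \<kappa> k) * h k)) \<and>
         L2norm (diff_op \<phi> \<phi>0 (\<lambda>k. complex_of_real (cut1 q \<epsilon> k0 \<kappa> k) * h k))
           \<le> sqrt (2*(1+4*\<kappa>\<^sup>2)) * M * (1+\<kappa>) * \<epsilon> powr (min 1 q) * L2norm h"
      by (simp add: mult_ac)
  qed
next
  fix r \<kappa> M :: real
  assume r: "r \<ge> -1" and \<kappa>: "0 < \<kappa> \<and> \<kappa> < pi"
  show "\<exists>C::real. \<forall>k0 \<phi> \<phi>0 \<theta>. k0 \<in> {0, pi} \<and> bloch_data k0 \<kappa> M \<phi> \<phi>0 \<theta> \<longrightarrow>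
              (\<forall>\<epsilon>::real. 0 < \<epsilon> \<and> \<epsilon> \<le> 1 \<longrightarrow> (\<forall>h. sq_int h \<longrightarrow>
                 sq_int (\<lambda>k. complex_of_real (cut2 r \<epsilon> k0 \<kappa> k) * h k) \<longrightarrow>
                 sq_int (diff_op \<phi> \<phi>0 (\<lambda>k. complex_of_real (cut2 r \<epsilon> k0 \<kappa> k) * h k)) \<and>
                 L2norm (diff_op \<phi> \<phi>0 (\<lambda>k. complex_of_real (cut2 r \<epsilon> k0 \<kappa> k) * h k))
                   \<le> C * \<epsilon> powr (min 0 r) * L2norm h))"
  proof (intro exI[of _ "sqrt (2*(1+4*\<kappa>\<^sup>2)) * M * (1+\<kappa>)"] allI impI)
    fix k0 \<epsilon> :: real and \<phi> \<theta> :: "real \<Rightarrow> real \<Rightarrow> complex" and \<phi>0 h :: "real \<Rightarrow> complex"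
    assume bd: "k0 \<in> {0, pi} \<and> bloch_data k0 \<kappa> M \<phi> \<phi>0 \<theta>" and e: "0 < \<epsilon> \<and> \<epsilon> \<le> 1" and hs: "sq_int h"
      and us: "sq_int (\<lambda>k. complex_of_real (cut2 r \<epsilon> k0 \<kappa> k) * h k)"
    have c: "sq_int (diff_op \<phi> \<phi>0 (\<lambda>k. complex_of_real (cut2 r \<epsilon> k0 \<kappa> k) * h k)) \<and>
         L2norm (diff_op \<phi> \<phi>0 (\<lambda>k. complex_of_real (cut2 r \<epsilon> k0 \<kappa> k) * h k))
           \<le> sqrt (2*(1+4*\<kappa>\<^sup>2)) * M * ((1+\<kappa>) * \<epsilon> powr (min 0 r)) * L2norm h"
    proof (rule core[OF conjunct2[OF bd] _ cut2_meas _ _ hs us])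
      show "0 < \<kappa>" using \<kappa> by simp
      show "\<And>k. \<kappa> < \<bar>k - k0\<bar> \<Longrightarrow> cut2 r \<epsilon> k0 \<kappa> k = 0" by (simp add: cut2_def indicator_def)
      show "\<And>k. \<bar>(k - k0) * cut2 r \<epsilon> k0 \<kappa> k\<bar> \<le> (1+\<kappa>) * \<epsilon> powr (min 0 r)"
        using r e \<kappa> by (intro cut2_bound) auto
    qed
    then show "sq_int (diff_op \<phi> \<phi>0 (\<lambda>k. complex_of_real (cut2 r \<epsilon> k0 \<kappa> k) * h k)) \<and>
         L2norm (diff_op \<phi> \<phi>0 (\<lambda>k. complex_of_real (cut2 r \<epsilon> k0 \<kappa> k) * h k))
           \<le> sqrt (2*(1+4*\<kappa>\<^sup>2)) * M * (1+\<kappa>) * \<epsilon> powr (min 0 r) * L2norm h"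
      by (simp add: mult_ac)
  qed
qed


end
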